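(* Let $w\ge 0$ be an even integer, let $\varphi_1,\dots,\varphi_r$ be a basis of the space of cusp forms of weight $w+2$ for $PSL(2,\mathbb{Z})$, and let $A_1,\dots,A_r$ be non-commuting associative formal variables. For $(p,q)\in W$ put $\Omega(p,q):=\sum_{j=1}^r A_j\varphi_j(z)(pz-q)^w\,dz$, and define $$f(p,q):=J_0^{i\infty}(\Omega(p,q)),\qquad \mathcal{D}(p,q):=J_{q/p}^{i\infty}(\Omega(p,q)),$$ with values in the multiplicative group $\mathbf{G}:=1+(A_1,\dots,A_r)$ of the ring $\mathbb{C}\langle\langle A_1,\dots,A_r\rangle\rangle$ of non-commutative formal power series. Then $f$ is a $\mathbf{G}$-valued reciprocity function and $\mathcal{D}:W\to\mathbf{G}$ is a generalized $\mathbf{G}$-valued Dedekind symbol with reciprocity function $f$.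
   Context: $W:=\{(p,q)\in\mathbb{Z}\times\mathbb{Z}:\gcd(p,q)=1\}$; for $p=0$, $q/p$ means the cusp $\infty$. For a cusp form $\varphi$ of weight $w+2$ one has $\varphi(z+1)=\varphi(z)$ and $\varphi(-z^{-1})=\varphi(z)z^{w+2}$. For cusps $a,b\in\mathbb{P}^1(\mathbb{Q})$ and such a form-valued 1-form $\Omega$, the iterated integral is $J_a^b(\Omega):=1+\sum_{n\ge1}\int_a^b\Omega(z_1)\int_a^{z_1}\Omega(z_2)\cdots\int_a^{z_{n-1}}\Omega(z_n)$, all integrals taken along the oriented geodesic in the upper half-plane from $a$ to $b$ (so that $J_b^cJ_a^b=J_a^c$). A $\mathbf{G}$-valued reciprocity function is a map $f:W\to\mathbf{G}$ with $f(p,-q)=f(-p,q)$, $f(p,q)f(-q,p)=1$, and $f(p,p+q)f(p+q,q)=f(p,q)$. A generalized $\mathbf{G}$-valued Dedekind symbol with reciprocity function $f$ is a map $\mathcal{D}:W\to\mathbf{G}$ with $\mathcal{D}(p,q)=\mathcal{D}(p,q+p)$, $\mathcal{D}(p,-q)=\mathcal{D}(-p,q)$, and $\mathcal{D}(p,q)\mathcal{D}(q,-p)^{-1}=f(p,q)$. *)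

theory Defs
  imports "HOL-Analysis.Analysis"
begin

definition upper_half :: "complex set" where
  "upper_half = {z. Im z > 0}"

definition cusp_form :: "nat \<Rightarrow> (complex \<Rightarrow> complex) \<Rightarrow> bool" where
  "cusp_form k \<phi> \<longleftrightarrow>
     \<phi> holomorphic_on upper_half \<and>
     (\<forall>z\<in>upper_half. \<phi> (z + 1) = \<phi> z) \<and>
     (\<forall>z\<in>upper_half. \<phi> (- inverse z) = \<phi> z * z ^ k) \<and>
     (\<phi> \<longlongrightarrow> 0) (filtercomap Im at_top)"

definition cusp_form_basis :: "nat \<Rightarrow> nat \<Rightarrow> (nat \<Rightarrow> complex \<Rightarrow> complex) \<Rightarrow> bool" where
  "cusp_form_basis k r \<phi> \<longleftrightarrow>
     (\<forall>j<r. cusp_form k (\<phi> j)) \<and>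
     (\<forall>c. (\<forall>z\<in>upper_half. (\<Sum>j<r. c j * \<phi> j z) = 0) \<longrightarrow> (\<forall>j<r. c j = 0)) \<and>
     (\<forall>\<psi>. cusp_form k \<psi> \<longrightarrow> (\<exists>c. \<forall>z\<in>upper_half. \<psi> z = (\<Sum>j<r. c j * \<phi> j z)))"

text \<open>A series is its coefficient function on words (lists of letter indices);
  the word [j1,...,jn] stands for the monomial A_j1 ... A_jn.\<close>
type_synonym ncps = "nat list \<Rightarrow> complex"

definition nc_one :: ncps where
  "nc_one = (\<lambda>ws. if ws = [] then 1 else 0)"

definition nc_mult :: "ncps \<Rightarrow> ncps \<Rightarrow> ncps" where
  "nc_mult a b = (\<lambda>ws. \<Sum>i\<le>length ws. a (take i ws) * b (drop i ws))"

definition nc_inverse :: "ncps \<Rightarrow> ncps" where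
  "nc_inverse a = (THE b. nc_mult a b = nc_one \<and> nc_mult b a = nc_one)"

definition nc_group :: "nat \<Rightarrow> ncps set" where
  "nc_group r = {a. a [] = 1 \<and> (\<forall>ws. \<not> set ws \<subseteq> {..<r} \<longrightarrow> a ws = 0)}"

definition W :: "(int \<times> int) set" where
  "W = {(p, q). coprime p q}"

definition reciprocity_function :: "nat \<Rightarrow> (int \<Rightarrow> int \<Rightarrow> ncps) \<Rightarrow> bool" where
  "reciprocity_function r f \<longleftrightarrow>
     (\<forall>(p, q)\<in>W. f p q \<in> nc_group r) \<and>
     (\<forall>(p, q)\<in>W. f p (- q) = f (- p) q) \<and>
     (\<forall>(p, q)\<in>W. nc_mult (f p q) (f (- q) p) = nc_one) \<and>
     (\<forall>(p, q)\<in>W. nc_mult (f p (p + q)) (f (p + q) q) = f p q)"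

definition dedekind_symbol :: "nat \<Rightarrow> (int \<Rightarrow> int \<Rightarrow> ncps) \<Rightarrow> (int \<Rightarrow> int \<Rightarrow> ncps) \<Rightarrow> bool" where
  "dedekind_symbol r f D \<longleftrightarrow>
     (\<forall>(p, q)\<in>W. D p q \<in> nc_group r) \<and>
     (\<forall>(p, q)\<in>W. D p q = D p (q + p)) \<and>
     (\<forall>(p, q)\<in>W. D p (- q) = D (- p) q) \<and>
     (\<forall>(p, q)\<in>W. nc_mult (D p q) (nc_inverse (D q (- p))) = f p q)"

text \<open>The geodesic from a real cusp x to i infinity is the vertical ray z = x + i s, s from 0 to infinity.
  vert_iter om x ws t is the iterated integral from x to x + i t for the word ws;
  om j is the coefficient 1-form of A_j (dz = i ds).\<close>
fun vert_iter :: "(nat \<Rightarrow> complex \<Rightarrow> complex) \<Rightarrow> real \<Rightarrow> nat list \<Rightarrow> real \<Rightarrow> complex" where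
  "vert_iter om x [] t = 1"
| "vert_iter om x (j # ws) t =
     integral {0..t} (\<lambda>s. om j (Complex x s) * vert_iter om x ws s * \<i>)"

definition J_to_infty :: "(nat \<Rightarrow> complex \<Rightarrow> complex) \<Rightarrow> real \<Rightarrow> ncps" where
  "J_to_infty om x = (\<lambda>ws. Lim at_top (\<lambda>t. vert_iter om x ws t))"

definition Omega :: "(nat \<Rightarrow> complex \<Rightarrow> complex) \<Rightarrow> nat \<Rightarrow> nat \<Rightarrow> int \<Rightarrow> int \<Rightarrow> nat \<Rightarrow> complex \<Rightarrow> complex" where
  "Omega \<phi> r w p q = (\<lambda>j z. if j < r then \<phi> j z * (of_int p * z - of_int q) ^ w else 0)"

definition recip_f :: "(nat \<Rightarrow> complex \<Rightarrow> complex) \<Rightarrow> nat \<Rightarrow> nat \<Rightarrow> int \<Rightarrow> int \<Rightarrow> ncps" where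
  "recip_f \<phi> r w p q = J_to_infty (Omega \<phi> r w p q) 0"

text \<open>For p = 0 the cusp q/p is infinity = i infinity, so the iterated integral is trivial (= 1).\<close>
definition dedekind_D :: "(nat \<Rightarrow> complex \<Rightarrow> complex) \<Rightarrow> nat \<Rightarrow> nat \<Rightarrow> int \<Rightarrow> int \<Rightarrow> ncps" where
  "dedekind_D \<phi> r w p q =
     (if p = 0 then nc_one else J_to_infty (Omega \<phi> r w p q) (of_int q / of_int p))"

end

theory Submission
  imports Defs "HOL-Complex_Analysis.Complex_Analysis"
begin

definition nshift :: "ncps \<Rightarrow> nat \<Rightarrow> ncps" where
  "nshift a j = (\<lambda>v. a (j # v))"

lemma nc_mult_Nil[simp]: "nc_mult a b [] = a [] * b []"
  by (simp add: nc_mult_def)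

lemma nc_mult_Cons:
  "nc_mult a b (j # ws) = a [] * b (j # ws) + nc_mult (nshift a j) b ws"
  unfolding nc_mult_def nshift_def
  by (simp add: sum.atMost_Suc_shift del: sum.atMost_Suc)

lemma nc_mult_one_left[simp]: "nc_mult nc_one a = a"
proof
  fix ws show "nc_mult nc_one a ws = a ws"
  proof -
    have "nc_mult nc_one a ws = (\<Sum>i\<le>length ws. if i = 0 then a ws else 0)"
      unfolding nc_mult_def nc_one_def by (intro sum.cong) auto
    then show ?thesis by simp
  qed
qed

lemma nc_mult_one_right[simp]: "nc_mult a nc_one = a"
proof
  fix ws show "nc_mult a nc_one ws = a ws"
  proof -
    have "nc_mult a nc_one ws = (\<Sum>i\<le>length ws. if i = length ws then a ws else 0)"
      unfolding nc_mult_def nc_one_def by (intro sum.cong) auto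
    then show ?thesis by simp
  qed
qed

lemma nc_mult_add_left:
  "nc_mult (\<lambda>v. c * a v + b v) d ws = c * nc_mult a d ws + nc_mult b d ws"
  unfolding nc_mult_def by (simp add: algebra_simps sum.distrib sum_distrib_left)

lemma nc_mult_assoc: "nc_mult (nc_mult a b) c = nc_mult a (nc_mult b c)"
proof
  fix ws show "nc_mult (nc_mult a b) c ws = nc_mult a (nc_mult b c) ws"
  proof (induction ws arbitrary: a b c)
    case Nil then show ?case by simp
  next
    case (Cons j ws)
    have sh: "nshift (nc_mult a b) j = (\<lambda>v. a [] * nshift b j v + nc_mult (nshift a j) b v)"
      by (rule ext) (simp add: nshift_def nc_mult_Cons)
    have "nc_mult (nc_mult a b) c (j # ws) =
        a [] * b [] * c (j # ws) + (a [] * nc_mult (nshift b j) c ws + nc_mult (nc_mult (nshift a j) b) c ws)"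
      by (simp add: nc_mult_Cons sh nc_mult_add_left)
    also have "\<dots> = a [] * nc_mult b c (j # ws) + nc_mult (nshift a j) (nc_mult b c) ws"
      by (simp add: Cons nc_mult_Cons algebra_simps)
    also have "\<dots> = nc_mult a (nc_mult b c) (j # ws)"
      by (simp add: nc_mult_Cons)
    finally show ?case .
  qed
qed

function rinv :: "ncps \<Rightarrow> nat list \<Rightarrow> complex" where
  "rinv a [] = 1"
| "rinv a (j # ws) = - (\<Sum>i\<le>length ws. a (j # take i ws) * rinv a (drop i ws))"
  by pat_completeness auto
termination by (relation "Wellfounded.measure (\<lambda>(a, ws). length ws)") auto

lemma rinv_right:
  assumes "a [] = 1" shows "nc_mult a (rinv a) = nc_one"
proof
  fix ws show "nc_mult a (rinv a) ws = nc_one ws"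
    by (cases ws) (simp_all add: nc_mult_Cons assms nc_one_def, simp add: nc_mult_def nshift_def)
qed

lemma nc_inv_exists:
  assumes "a [] = 1" shows "nc_mult a (rinv a) = nc_one \<and> nc_mult (rinv a) a = nc_one"
proof -
  have c: "rinv a [] = 1" by simp
  have "a = nc_mult a (nc_mult (rinv a) (rinv (rinv a)))"
    using rinv_right[of "rinv a", OF c] by simp
  also have "\<dots> = rinv (rinv a)"
    by (simp add: nc_mult_assoc[symmetric] rinv_right[of a, OF assms])
  finally show ?thesis using rinv_right[of a, OF assms] rinv_right[of "rinv a", OF c] by simp
qed

lemma nc_inverse_eq:
  assumes "nc_mult a b = nc_one" "nc_mult b a = nc_one"
  shows "nc_inverse a = b"
  unfolding nc_inverse_def
proof (rule the_equality)
  fix c assume c: "nc_mult a c = nc_one \<and> nc_mult c a = nc_one"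
  have "c = nc_mult (nc_mult b a) c" by (simp add: assms)
  also have "\<dots> = b" by (simp add: nc_mult_assoc c)
  finally show "c = b" .
qed (use assms in auto)

lemma nc_inverse:
  assumes "a [] = 1"
  shows "nc_mult a (nc_inverse a) = nc_one" "nc_mult (nc_inverse a) a = nc_one"
  using nc_inverse_eq[of a "rinv a"] nc_inv_exists[of a, OF assms] by auto

lemma nc_inverse_Nil: "a [] = 1 \<Longrightarrow> nc_inverse a [] = 1"
  using nc_inverse(1)[of a] by (metis mult_1 nc_mult_Nil nc_one_def)

lemma nc_mult_Nil_one: "a [] = 1 \<Longrightarrow> b [] = 1 \<Longrightarrow> nc_mult a b [] = 1"
  by simp

lemma nc_inverse_mult:
  assumes "a [] = 1" "b [] = 1"
  shows "nc_inverse (nc_mult a b) = nc_mult (nc_inverse b) (nc_inverse a)"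
proof (rule nc_inverse_eq)
  show "nc_mult (nc_mult a b) (nc_mult (nc_inverse b) (nc_inverse a)) = nc_one"
    by (metis assms nc_inverse(1) nc_mult_assoc nc_mult_one_left)
  show "nc_mult (nc_mult (nc_inverse b) (nc_inverse a)) (nc_mult a b) = nc_one"
    by (metis assms nc_inverse(2) nc_mult_assoc nc_mult_one_left)
qed

lemma nc_inverse_inverse: "a [] = 1 \<Longrightarrow> nc_inverse (nc_inverse a) = a"
  by (intro nc_inverse_eq) (auto simp: nc_inverse)

lemma tendsto_nc_mult:
  assumes "\<And>ws. ((\<lambda>t. a t ws) \<longlongrightarrow> A ws) F" "\<And>ws. ((\<lambda>t. b t ws) \<longlongrightarrow> B ws) F"
  shows "((\<lambda>t. nc_mult (a t) (b t) ws) \<longlongrightarrow> nc_mult A B ws) F"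
  unfolding nc_mult_def by (intro tendsto_intros assms)

lemma nc_group_mult:
  assumes "a \<in> nc_group r" "b \<in> nc_group r" shows "nc_mult a b \<in> nc_group r"
proof -
  have "nc_mult a b ws = 0" if "\<not> set ws \<subseteq> {..<r}" for ws
    unfolding nc_mult_def
  proof (intro sum.neutral ballI)
    fix i assume "i \<in> {..length ws}"
    have "ws = take i ws @ drop i ws" by simp
    then have "\<not> set (take i ws) \<subseteq> {..<r} \<or> \<not> set (drop i ws) \<subseteq> {..<r}"
      using that by (metis Un_subset_iff set_append)
    then show "a (take i ws) * b (drop i ws) = 0" using assms by (auto simp: nc_group_def)
  qed
  then show ?thesis using assms by (auto simp: nc_group_def)
qed

lemma nc_one_group: "nc_one \<in> nc_group r"
  by (auto simp: nc_group_def nc_one_def)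

lemma upper_half_open: "open upper_half"
  unfolding upper_half_def using open_halfspace_Im_gt[of 0] by simp

lemma upper_half_convex: "convex upper_half"
  unfolding upper_half_def using convex_halfspace_Im_gt[of 0] by simp

lemma in_H: "z \<in> upper_half \<longleftrightarrow> Im z > 0"
  by (simp add: upper_half_def)

definition mob :: "int \<Rightarrow> int \<Rightarrow> int \<Rightarrow> int \<Rightarrow> complex \<Rightarrow> complex" where
  "mob a b c d z = (of_int a * z + of_int b) / (of_int c * z + of_int d)"

lemma denom_nz:
  assumes "a * d - b * c = 1" "Im z > 0"
  shows "of_int c * z + of_int d \<noteq> (0::complex)"
proof
  assume h: "of_int c * z + of_int d = (0::complex)"
  have "Im (of_int c * z + of_int d) = of_int c * Im z" by simp
  then have "c * Im z = 0" using h by simp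
  then have "c = 0" using assms(2) by simp
  then show False using h assms(1) by simp
qed

lemma Im_mob:
  assumes "a * d - b * c = 1"
  shows "Im (mob a b c d z) = Im z / (cmod (of_int c * z + of_int d))\<^sup>2"
proof -
  have "Im (mob a b c d z) = (Im (of_int a * z + of_int b) * Re (of_int c * z + of_int d)
     - Re (of_int a * z + of_int b) * Im (of_int c * z + of_int d)) / (cmod (of_int c * z + of_int d))\<^sup>2"
    unfolding mob_def by (rule Im_divide')
  also have "Im (of_int a * z + of_int b) * Re (of_int c * z + of_int d)
     - Re (of_int a * z + of_int b) * Im (of_int c * z + of_int d) = of_int (a * d - b * c) * Im z"
    by (simp add: algebra_simps)
  finally show ?thesis using assms by simp
qed

lemma mob_H:
  assumes "a * d - b * c = 1" "z \<in> upper_half"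
  shows "mob a b c d z \<in> upper_half"
  using assms denom_nz[OF assms(1)] by (auto simp: in_H Im_mob)

lemma mob_comp:
  assumes "a * d - b * c = 1" "a' * d' - b' * c' = 1" "z \<in> upper_half"
  shows "mob a b c d (mob a' b' c' d' z) =
         mob (a*a' + b*c') (a*b' + b*d') (c*a' + d*c') (c*b' + d*d') z"
proof -
  have n1: "of_int c' * z + of_int d' \<noteq> 0" using denom_nz[OF assms(2)] assms(3) by (auto simp: in_H)
  have n2: "of_int c * mob a' b' c' d' z + of_int d \<noteq> 0"
    using denom_nz[OF assms(1)] mob_H[OF assms(2,3)] by (auto simp: in_H)
  have e: "of_int c * mob a' b' c' d' z + of_int d =
     (of_int (c*a' + d*c') * z + of_int (c*b' + d*d')) / (of_int c' * z + of_int d')"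
    using n1 unfolding mob_def by (simp add: divide_simps; simp add: algebra_simps)
  have e2: "of_int a * mob a' b' c' d' z + of_int b =
     (of_int (a*a' + b*c') * z + of_int (a*b' + b*d')) / (of_int c' * z + of_int d')"
    using n1 unfolding mob_def by (simp add: divide_simps; simp add: algebra_simps)
  have "mob a b c d (mob a' b' c' d' z) = (of_int a * mob a' b' c' d' z + of_int b) / (of_int c * mob a' b' c' d' z + of_int d)"
    by (simp add: mob_def)
  also have "\<dots> = mob (a*a' + b*c') (a*b' + b*d') (c*a' + d*c') (c*b' + d*d') z"
    using n1 by (simp only: e e2) (simp add: mob_def)
  finally show ?thesis .
qed

lemma cocycle:
  assumes "a' * d' - b' * c' = 1" "z \<in> upper_half"
  shows "(of_int c * mob a' b' c' d' z + of_int d) * (of_int c' * z + of_int d') =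
         of_int (c*a' + d*c') * z + of_int (c*b' + d*d')"
proof -
  have n1: "of_int c' * z + of_int d' \<noteq> 0" using denom_nz[OF assms(1)] assms(2) by (auto simp: in_H)
  then show ?thesis unfolding mob_def by (simp add: divide_simps; simp add: algebra_simps)
qed

definition modular :: "nat \<Rightarrow> (complex \<Rightarrow> complex) \<Rightarrow> int \<Rightarrow> int \<Rightarrow> int \<Rightarrow> int \<Rightarrow> bool" where
  "modular k \<phi> a b c d \<longleftrightarrow>
     (\<forall>z\<in>upper_half. \<phi> (mob a b c d z) = (of_int c * z + of_int d) ^ k * \<phi> z)"

lemma modular_comp:
  assumes "a * d - b * c = 1" "a' * d' - b' * c' = 1"
    and "modular k \<phi> a b c d" "modular k \<phi> a' b' c' d'"
  shows "modular k \<phi> (a*a' + b*c') (a*b' + b*d') (c*a' + d*c') (c*b' + d*d')"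
  unfolding modular_def
proof
  fix z assume z: "z \<in> upper_half"
  have "\<phi> (mob (a*a' + b*c') (a*b' + b*d') (c*a' + d*c') (c*b' + d*d') z)
      = \<phi> (mob a b c d (mob a' b' c' d' z))" using mob_comp[OF assms(1,2) z] by simp
  also have "\<dots> = (of_int c * mob a' b' c' d' z + of_int d) ^ k * ((of_int c' * z + of_int d') ^ k * \<phi> z)"
    using assms(3,4) mob_H[OF assms(2) z] z unfolding modular_def by simp
  also have "\<dots> = ((of_int c * mob a' b' c' d' z + of_int d) * (of_int c' * z + of_int d')) ^ k * \<phi> z"
    by (simp add: power_mult_distrib)
  also have "\<dots> = (of_int (c*a' + d*c') * z + of_int (c*b' + d*d')) ^ k * \<phi> z"
    using cocycle[OF assms(2) z] by simp
  finally show "\<phi> (mob (a*a' + b*c') (a*b' + b*d') (c*a' + d*c') (c*b' + d*d') z) =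
      (of_int (c*a' + d*c') * z + of_int (c*b' + d*d')) ^ k * \<phi> z" .
qed

lemma cusp_periodic_nat:
  assumes "cusp_form k \<phi>" "z \<in> upper_half"
  shows "\<phi> (z + of_nat n) = \<phi> z" "\<phi> (z - of_nat n) = \<phi> z"
proof -
  have p: "\<And>z. z \<in> upper_half \<Longrightarrow> \<phi> (z + 1) = \<phi> z" using assms(1) by (auto simp: cusp_form_def)
  show "\<phi> (z + of_nat n) = \<phi> z"
  proof (induction n)
    case (Suc n)
    have "z + of_nat n \<in> upper_half" using assms(2) by (simp add: in_H)
    then have "\<phi> (z + of_nat n + 1) = \<phi> z" using p[of "z + of_nat n"] Suc by simp
    then show ?case by (simp add: add_ac)
  qed simp
  show "\<phi> (z - of_nat n) = \<phi> z"
  proof (induction n)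
    case (Suc n)
    have "z - of_nat n - 1 \<in> upper_half" using assms(2) by (simp add: in_H)
    then have "\<phi> (z - of_nat n - 1 + 1) = \<phi> (z - of_nat n - 1)" using p by blast
    then show ?case using Suc by (simp add: algebra_simps)
  qed simp
qed

lemma cusp_periodic:
  assumes "cusp_form k \<phi>" "z \<in> upper_half"
  shows "\<phi> (z + of_int n) = \<phi> z"
proof (cases "n \<ge> 0")
  case True
  then have "of_int n = (of_nat (nat n) :: complex)" by simp
  then show ?thesis using cusp_periodic_nat(1)[OF assms] by simp
next
  case False
  then have "of_int n = - (of_nat (nat (-n)) :: complex)" by simp
  then show ?thesis using cusp_periodic_nat(2)[OF assms] by simp
qed

lemma modular_T:
  assumes "cusp_form k \<phi>" shows "modular k \<phi> 1 n 0 1"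
  using cusp_periodic[OF assms] unfolding modular_def mob_def by simp

lemma modular_Tm:
  assumes "cusp_form k \<phi>" "even k" shows "modular k \<phi> (-1) n 0 (-1)"
  unfolding modular_def mob_def
proof
  fix z assume z: "z \<in> upper_half"
  have "(- z + of_int n) / - 1 = z + of_int (-n)" by simp
  then show "\<phi> ((of_int (- 1) * z + of_int n) / (of_int 0 * z + of_int (- 1))) =
          (of_int 0 * z + of_int (- 1)) ^ k * \<phi> z"
    using cusp_periodic[OF assms(1) z, of "-n"] assms(2) by simp
qed

lemma modular_S:
  assumes "cusp_form k \<phi>" shows "modular k \<phi> 0 (-1) 1 0"
  using assms unfolding modular_def mob_def cusp_form_def
  by (auto simp: divide_inverse mult.commute)

lemma modular_Sinv:
  assumes "cusp_form k \<phi>" "even k" shows "modular k \<phi> 0 1 (-1) 0"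
  using assms unfolding modular_def mob_def cusp_form_def
  by (auto simp: divide_inverse mult.commute)

lemma modular_all_aux:
  assumes "cusp_form k \<phi>" "even k"
  shows "\<forall>a b c d. nat \<bar>c\<bar> = m \<longrightarrow> a * d - b * c = 1 \<longrightarrow> modular k \<phi> a b c d"
proof (induction m rule: less_induct)
  case (less m)
  show ?case
  proof (intro allI impI)
    fix a b c d :: int assume m: "nat \<bar>c\<bar> = m" and det: "a * d - b * c = 1"
    show "modular k \<phi> a b c d"
    proof (cases "c = 0")
      case True
      then have "a * d = 1" using det by simp
      then have "(a = 1 \<and> d = 1) \<or> (a = -1 \<and> d = -1)" using zmult_eq_1_iff by blast
      then show ?thesis using modular_T[OF assms(1)] modular_Tm[OF assms] True by auto
    next
      case False
      define n where "n = - (a div c)"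
      have amod: "a + n * c = a mod c" unfolding n_def
        by (metis add.commute diff_conv_add_uminus minus_div_mult_eq_mod minus_mult_left)
      have lt: "nat \<bar>a + n * c\<bar> < m" using False m unfolding amod
        by (metis abs_mod_less nat_less_eq_zless abs_ge_zero)
      have det2: "(-c) * (b + n*d) - (-d) * (a + n*c) = 1" using det by (simp add: algebra_simps)
      have M2: "modular k \<phi> (-c) (-d) (a + n*c) (b + n*d)"
        using less[OF lt] det2 by blast
      have M3: "modular k \<phi> (0*(-c) + 1*(a+n*c)) (0*(-d) + 1*(b+n*d)) ((-1)*(-c) + 0*(a+n*c)) ((-1)*(-d) + 0*(b+n*d))"
        by (rule modular_comp[OF _ det2 modular_Sinv[OF assms] M2]) simp
      have det3: "(0*(-c) + 1*(a+n*c)) * ((-1)*(-d) + 0*(b+n*d)) - (0*(-d) + 1*(b+n*d)) * ((-1)*(-c) + 0*(a+n*c)) = 1"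
        using det by (simp add: algebra_simps)
      note M4 = modular_comp[OF _ det3 modular_T[OF assms(1), of "-n"] M3]
      then show ?thesis by (simp add: algebra_simps)
    qed
  qed
qed

lemma modular_all:
  assumes "cusp_form k \<phi>" "even k" "a * d - b * c = 1"
  shows "modular k \<phi> a b c d"
  using modular_all_aux[OF assms(1,2)] assms(3) by blast

lemma exp_same_phi:
  assumes "cusp_form k \<phi>" "w \<in> upper_half" "exp (2 * of_real pi * \<i> * z) = exp (2 * of_real pi * \<i> * w)"
  shows "\<phi> z = \<phi> w"
proof -
  obtain n :: int where n: "2 * of_real pi * \<i> * z = 2 * of_real pi * \<i> * w + (of_int (2 * n) * pi) * \<i>"
    using assms(3) exp_eq by blast
  have "z = w + of_int n"
  proof -
    have "2 * of_real pi * \<i> * z = 2 * of_real pi * \<i> * (w + of_int n)"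
      using n by (simp add: algebra_simps)
    then show ?thesis by simp
  qed
  then show ?thesis using cusp_periodic[OF assms(1,2)] by simp
qed

lemma Im_Ln_div:
  assumes "\<zeta> \<noteq> 0"
  shows "Im (Ln \<zeta> / (2 * of_real pi * \<i>)) = - ln (cmod \<zeta>) / (2 * pi)"
proof -
  have "Ln \<zeta> / (2 * of_real pi * \<i>) = - \<i> * Ln \<zeta> / (2 * of_real pi)"
    by (simp add: field_simps)
  also have "Im \<dots> = - Re (Ln \<zeta>) / (2 * pi)"
    by (simp add: Im_divide_of_real)
  finally show ?thesis using assms by simp
qed

lemma cusp_decay:
  assumes "cusp_form k \<phi>"
  shows "\<exists>C Y. Y > 0 \<and> (\<forall>z. Im z \<ge> Y \<longrightarrow> cmod (\<phi> z) \<le> C * exp (- 2 * pi * Im z))"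
proof -
  define c :: complex where "c = 2 * of_real pi * \<i>"
  have c0: "c \<noteq> 0" by (simp add: c_def)
  define g where "g = (\<lambda>\<zeta>. \<phi> (Ln \<zeta> / c))"
  define g2 where "g2 = (\<lambda>\<zeta>. \<phi> ((Ln (- \<zeta>) + \<i> * pi) / c))"
  define B where "B = ball (0::complex) 1 - {0}"
  have oB: "open B" unfolding B_def by auto
  have holphi: "\<phi> holomorphic_on upper_half" using assms by (simp add: cusp_form_def)
  have lnH: "Ln \<zeta> / c \<in> upper_half" if "\<zeta> \<in> B" for \<zeta>
  proof -
    have "0 < cmod \<zeta>" "cmod \<zeta> < 1" using that by (auto simp: B_def)
    then have "ln (cmod \<zeta>) < 0" by simp
    then show ?thesis using that Im_Ln_div[of \<zeta>] by (auto simp: in_H c_def B_def divide_neg_pos)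
  qed
  have ln2H: "(Ln (- \<zeta>) + \<i> * pi) / c \<in> upper_half" if "\<zeta> \<in> B" for \<zeta>
  proof -
    have "(Ln (- \<zeta>) + \<i> * pi) / c = Ln (- \<zeta>) / c + 1/2"
      by (simp add: c_def field_simps)
    then show ?thesis using lnH[of "-\<zeta>"] that by (simp add: in_H B_def)
  qed
  have gg2: "g \<zeta> = g2 \<zeta>" if "\<zeta> \<in> B" for \<zeta>
  proof -
    have z0: "\<zeta> \<noteq> 0" using that by (simp add: B_def)
    have "exp (c * ((Ln (- \<zeta>) + \<i> * pi) / c)) = exp (c * (Ln \<zeta> / c))"
      using c0 z0 by (simp add: exp_add)
    then show ?thesis unfolding g_def g2_def
      using exp_same_phi[OF assms ln2H[OF that]] by (metis c_def)
  qed
  have phid: "\<phi> field_differentiable at w" if "w \<in> upper_half" for w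
    using holphi that upper_half_open holomorphic_on_imp_differentiable_at by blast
  have holg: "g holomorphic_on B"
    unfolding holomorphic_on_open[OF oB]
  proof
    fix \<zeta> assume z: "\<zeta> \<in> B"
    show "\<exists>f'. (g has_field_derivative f') (at \<zeta>)"
    proof (cases "\<zeta> \<in> \<real>\<^sub>\<le>\<^sub>0")
      case False
      have "(\<lambda>\<zeta>. Ln \<zeta> / c) field_differentiable at \<zeta>"
        using False c0 by (intro derivative_intros field_differentiable_at_Ln field_differentiable_divide) auto
      then have "(\<phi> \<circ> (\<lambda>\<zeta>. Ln \<zeta> / c)) field_differentiable at \<zeta>"
        by (rule field_differentiable_compose) (use phid lnH z in auto)
      then show ?thesis unfolding g_def field_differentiable_def o_def by blast
    next
      case True
      then have nz: "- \<zeta> \<notin> \<real>\<^sub>\<le>\<^sub>0" using z by (auto simp: B_def complex_nonpos_Reals_iff complex_eq_iff)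
      have "(\<lambda>\<zeta>. (Ln (- \<zeta>) + \<i> * pi) / c) field_differentiable at \<zeta>"
      proof -
        have "(\<lambda>\<zeta>. Ln (- \<zeta>)) field_differentiable at \<zeta>"
          using field_differentiable_compose[of uminus \<zeta> Ln] nz
          by (simp add: o_def field_differentiable_at_Ln field_differentiable_minus field_differentiable_ident)
        then show ?thesis
          using c0 by (intro field_differentiable_divide field_differentiable_add) auto
      qed
      then have "(\<phi> \<circ> (\<lambda>\<zeta>. (Ln (- \<zeta>) + \<i> * pi) / c)) field_differentiable at \<zeta>"
        by (rule field_differentiable_compose) (use phid ln2H z in auto)
      then obtain f' where "(g2 has_field_derivative f') (at \<zeta>)"
        unfolding g2_def field_differentiable_def o_def by blast
      then have "(g has_field_derivative f') (at \<zeta>)"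
        by (rule has_field_derivative_transform_within_open[OF _ oB z]) (simp add: gg2)
      then show ?thesis by blast
    qed
  qed
  define g0 where "g0 = g(0 := 0)"
  have lim0: "(g0 \<longlongrightarrow> 0) (at 0)"
  proof -
    have ev: "eventually (\<lambda>z. dist (\<phi> z) 0 < e) (filtercomap Im at_top)" if "e > 0" for e
      using assms that by (simp add: cusp_form_def tendsto_iff)
    show ?thesis
      unfolding tendsto_iff
    proof (intro allI impI)
      fix e :: real assume e: "e > 0"
      obtain Y where Y: "\<And>z. Im z \<ge> Y \<Longrightarrow> dist (\<phi> z) 0 < e"
        using ev[OF e] by (auto simp: eventually_filtercomap_at_top_linorder)
      define \<delta> where "\<delta> = min 1 (exp (- 2 * pi * Y))"
      have \<delta>: "\<delta> > 0" by (simp add: \<delta>_def)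
      show "eventually (\<lambda>x. dist (g0 x) 0 < e) (at 0)"
        unfolding eventually_at
      proof (intro exI[of _ \<delta>] conjI ballI allI impI)
        fix \<zeta> :: complex assume h: "\<zeta> \<noteq> 0 \<and> dist \<zeta> 0 < \<delta>"
        then have n: "0 < cmod \<zeta>" "cmod \<zeta> < exp (- 2 * pi * Y)" by (auto simp: \<delta>_def)
        then have "ln (cmod \<zeta>) < - 2 * pi * Y" by (metis ln_exp ln_less_cancel_iff exp_gt_zero)
        moreover have "Im (Ln \<zeta> / c) * (2 * pi) = - ln (cmod \<zeta>)"
          using Im_Ln_div[of \<zeta>] h unfolding c_def by simp
        ultimately have "Y * (2 * pi) \<le> Im (Ln \<zeta> / c) * (2 * pi)" by (simp add: algebra_simps)
        then have "Im (Ln \<zeta> / c) \<ge> Y" by (simp add: mult_le_cancel_right)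
        then show "dist (g0 \<zeta>) 0 < e" using Y h by (simp add: g0_def g_def)
      qed (rule \<delta>)
    qed
  qed
  have holg0: "g0 holomorphic_on ball 0 1"
  proof (rule no_isolated_singularity'[where K = "{0}"])
    show "g0 holomorphic_on ball 0 1 - {0}"
      using holomorphic_transform[OF holg, of g0] by (auto simp: g0_def B_def)
    show "(g0 \<longlongrightarrow> g0 z) (at z within ball 0 1)" if "z \<in> {0}" for z
      using tendsto_mono[OF at_le[of "ball 0 1"] lim0] that by (simp add: g0_def)
  qed auto
  then obtain D where D: "(g0 has_field_derivative D) (at 0)"
    using holomorphic_on_imp_differentiable_at[OF holg0, of 0] by (auto simp: field_differentiable_def)
  then have "((\<lambda>y. (g0 y - g0 0) / y) \<longlongrightarrow> D) (at 0)"
    by (simp add: DERIV_def)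
  then have "eventually (\<lambda>y. dist ((g0 y - g0 0) / y) D < 1) (at 0)"
    by (simp add: tendsto_iff)
  then obtain \<delta> where \<delta>: "\<delta> > 0" "\<And>y. y \<noteq> 0 \<Longrightarrow> dist y 0 < \<delta> \<Longrightarrow> dist (g0 y / y) D < 1"
    by (auto simp: eventually_at g0_def)
  define Y where "Y = max 1 (- ln (min \<delta> 1 / 2) / (2 * pi))"
  show ?thesis
  proof (intro exI conjI allI impI)
    show "Y > 0" by (simp add: Y_def)
    fix z assume z: "Im z \<ge> Y"
    define \<zeta> where "\<zeta> = exp (c * z)"
    have nz: "cmod \<zeta> = exp (- 2 * pi * Im z)" by (simp add: \<zeta>_def c_def)
    have zH: "z \<in> upper_half" using z by (simp add: in_H Y_def)
    have "- ln (min \<delta> 1 / 2) / (2 * pi) \<le> Im z" using z unfolding Y_def by simp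
    then have "(- ln (min \<delta> 1 / 2) / (2 * pi)) * (2 * pi) \<le> Im z * (2 * pi)"
      by (rule mult_right_mono) simp
    moreover have "(- ln (min \<delta> 1 / 2) / (2 * pi)) * (2 * pi) = - ln (min \<delta> 1 / 2)" by simp
    moreover have "Im z * (2 * pi) = 2 * pi * Im z" by simp
    ultimately have "ln (min \<delta> 1 / 2) \<ge> - 2 * pi * Im z" by linarith
    then have "exp (- 2 * pi * Im z) \<le> exp (ln (min \<delta> 1 / 2))" by simp
    also have "exp (ln (min \<delta> 1 / 2)) = min \<delta> 1 / 2" using \<delta>(1) by simp
    finally have "exp (- 2 * pi * Im z) \<le> min \<delta> 1 / 2" .
    then have small: "cmod \<zeta> < \<delta>" "cmod \<zeta> < 1" using \<delta>(1) nz by linarith+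
    have z0: "\<zeta> \<noteq> 0" by (simp add: \<zeta>_def)
    have "g \<zeta> = \<phi> z" unfolding g_def
    proof (rule exp_same_phi[OF assms zH])
      show "exp (2 * complex_of_real pi * \<i> * (Ln \<zeta> / c)) = exp (2 * complex_of_real pi * \<i> * z)"
      proof -
        have "2 * complex_of_real pi * \<i> * (Ln \<zeta> / c) = Ln \<zeta>" using c0 unfolding c_def by simp
        then have "exp (2 * complex_of_real pi * \<i> * (Ln \<zeta> / c)) = \<zeta>" using z0 by simp
        moreover have "\<zeta> = exp (2 * complex_of_real pi * \<i> * z)" by (simp add: \<zeta>_def c_def)
        ultimately show ?thesis by (rule trans)
      qed
    qed
    then have "g0 \<zeta> = \<phi> z" using z0 by (simp add: g0_def)
    moreover have "cmod (g0 \<zeta> / \<zeta>) \<le> cmod D + 1"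
    proof -
      have "dist (g0 \<zeta> / \<zeta>) D < 1" using \<delta>(2)[OF z0] small by simp
      moreover have "cmod (g0 \<zeta> / \<zeta>) - cmod D \<le> cmod (g0 \<zeta> / \<zeta> - D)" by (rule norm_triangle_ineq2)
      ultimately show ?thesis by (simp add: dist_norm)
    qed
    ultimately have "cmod (\<phi> z) \<le> (cmod D + 1) * cmod \<zeta>"
      using z0 by (simp add: norm_divide divide_le_eq)
    then show "cmod (\<phi> z) \<le> (cmod D + 1) * exp (- 2 * pi * Im z)" using nz by simp
  qed
qed

definition prim :: "(complex \<Rightarrow> complex) \<Rightarrow> complex \<Rightarrow> complex \<Rightarrow> complex" where
  "prim f a = (SOME g. (\<forall>z\<in>upper_half. (g has_field_derivative f z) (at z)) \<and> g a = 0)"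

lemma prim:
  assumes "f holomorphic_on upper_half" "a \<in> upper_half"
  shows "(\<forall>z\<in>upper_half. (prim f a has_field_derivative f z) (at z)) \<and> prim f a a = 0"
proof -
  obtain g where g: "\<And>x. x \<in> upper_half \<Longrightarrow> (g has_field_derivative f x) (at x within upper_half)"
    using holomorphic_convex_primitive'[OF upper_half_convex upper_half_open assms(1)] by blast
  have "(\<forall>z\<in>upper_half. ((\<lambda>z. g z - g a) has_field_derivative f z) (at z)) \<and> (\<lambda>z. g z - g a) a = 0"
  proof (intro conjI ballI)
    fix z assume z: "z \<in> upper_half"
    have "(g has_field_derivative f z) (at z)" using g[OF z] unfolding at_within_open[OF z upper_half_open] .
    from DERIV_diff[OF this DERIV_const[of "g a"]]
    show "((\<lambda>z. g z - g a) has_field_derivative f z) (at z)" by simp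
  qed simp
  then have "(\<lambda>g. (\<forall>z\<in>upper_half. (g has_field_derivative f z) (at z)) \<and> g a = 0) (\<lambda>z. g z - g a)"
    by simp
  from someI[of "\<lambda>g. (\<forall>z\<in>upper_half. (g has_field_derivative f z) (at z)) \<and> g a = 0", OF this]
  show ?thesis unfolding prim_def .
qed

lemma deriv_unique:
  assumes "\<And>z. z \<in> upper_half \<Longrightarrow> (h1 has_field_derivative f z) (at z)"
    "\<And>z. z \<in> upper_half \<Longrightarrow> (h2 has_field_derivative f z) (at z)"
    "a \<in> upper_half" "z \<in> upper_half" "h1 a = h2 a"
  shows "h1 z = h2 z"
proof -
  have "\<exists>c. \<forall>x\<in>upper_half. h1 x - h2 x = c"
  proof (rule has_field_derivative_zero_constant[OF upper_half_convex])
    fix x assume x: "x \<in> upper_half"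
    from DERIV_diff[OF assms(1)[OF x] assms(2)[OF x]]
    have "((\<lambda>x. h1 x - h2 x) has_field_derivative 0) (at x)" by simp
    then show "((\<lambda>x. h1 x - h2 x) has_field_derivative 0) (at x within upper_half)"
      by (rule has_field_derivative_at_within)
  qed
  then obtain c where "\<forall>x\<in>upper_half. h1 x - h2 x = c" by blast
  then have "h1 z - h2 z = c" "h1 a - h2 a = c" using assms(3,4) by auto
  then show ?thesis using assms(5) by simp
qed

definition holo :: "(nat \<Rightarrow> complex \<Rightarrow> complex) \<Rightarrow> bool" where
  "holo om \<longleftrightarrow> (\<forall>j. om j holomorphic_on upper_half)"

fun G :: "(nat \<Rightarrow> complex \<Rightarrow> complex) \<Rightarrow> complex \<Rightarrow> nat list \<Rightarrow> complex \<Rightarrow> complex" where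
  "G om a [] = (\<lambda>z. 1)"
| "G om a (j # ws) = prim (\<lambda>z. om j z * G om a ws z) a"

lemma G_basic:
  assumes "holo om" "a \<in> upper_half"
  shows "G om a ws holomorphic_on upper_half \<and>
    (\<forall>j. \<forall>z\<in>upper_half. (G om a (j # ws) has_field_derivative om j z * G om a ws z) (at z)) \<and>
    (\<forall>j. G om a (j # ws) a = 0)"
proof (induction ws)
  case Nil
  have hh: "(\<lambda>z. om j z * G om a [] z) holomorphic_on upper_half" for j
    using assms(1) by (simp add: holo_def)
  show ?case
  proof (intro conjI allI ballI)
    show "G om a [] holomorphic_on upper_half" by simp
    fix j show "G om a [j] a = 0" using prim[OF hh[of j] assms(2)] by (simp only: G.simps(2))
    fix z assume "z \<in> upper_half"
    then show "(G om a [j] has_field_derivative om j z * G om a [] z) (at z)"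
      using prim[OF hh[of j] assms(2)] by (simp only: G.simps(2))
  qed
next
  case (Cons k ws)
  have h1: "G om a (k # ws) holomorphic_on upper_half"
    unfolding holomorphic_on_open[OF upper_half_open] using Cons by blast
  have hh: "(\<lambda>z. om j z * G om a (k # ws) z) holomorphic_on upper_half" for j
    using assms(1) h1 by (auto simp: holo_def simp del: G.simps intro!: holomorphic_intros)
  show ?case
  proof (intro conjI allI ballI)
    show "G om a (k # ws) holomorphic_on upper_half" by (rule h1)
    fix j show "G om a (j # k # ws) a = 0" using prim[OF hh[of j] assms(2)] by (simp only: G.simps(2))
    fix z assume "z \<in> upper_half"
    then show "(G om a (j # k # ws) has_field_derivative om j z * G om a (k # ws) z) (at z)"
      using prim[OF hh[of j] assms(2)] by (simp only: G.simps(2))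
  qed
qed

lemma G_deriv:
  assumes "holo om" "a \<in> upper_half" "z \<in> upper_half"
  shows "(G om a (j # ws) has_field_derivative om j z * G om a ws z) (at z)"
  using G_basic[OF assms(1,2)] assms(3) by blast

lemma G_base:
  assumes "holo om" "a \<in> upper_half"
  shows "G om a ws a = nc_one ws"
  using G_basic[OF assms(1,2)] by (cases ws) (auto simp: nc_one_def)

lemma G_hol:
  assumes "holo om" "a \<in> upper_half"
  shows "G om a ws holomorphic_on upper_half"
  using G_basic[OF assms(1,2)] by blast

lemma G_char:
  assumes "holo om" "a \<in> upper_half"
    and F0: "\<And>z. z \<in> upper_half \<Longrightarrow> F [] z = 1"
    and F1: "\<And>j ws z. z \<in> upper_half \<Longrightarrow> (F (j # ws) has_field_derivative om j z * F ws z) (at z)"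
    and z: "z \<in> upper_half"
  shows "F ws z = nc_mult (\<lambda>v. G om a v z) (\<lambda>v. F v a) ws"
  using z
proof (induction ws arbitrary: z)
  case Nil
  then show ?case using F0 assms(2) by simp
next
  case (Cons j ws)
  define R where "R = (\<lambda>z. nc_mult (\<lambda>v. G om a v z) (\<lambda>v. F v a) (j # ws))"
  have R: "R z = F (j # ws) a + (\<Sum>i\<le>length ws. G om a (j # take i ws) z * F (drop i ws) a)" for z
    unfolding R_def nc_mult_Cons by (simp add: nc_mult_def nshift_def)
  have dR: "(R has_field_derivative om j z * F ws z) (at z)" if z: "z \<in> upper_half" for z
  proof -
    have "((\<lambda>z. F (j # ws) a + (\<Sum>i\<le>length ws. G om a (j # take i ws) z * F (drop i ws) a))
        has_field_derivative 0 + (\<Sum>i\<le>length ws. (om j z * G om a (take i ws) z) * F (drop i ws) a)) (at z)"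
      by (intro derivative_intros DERIV_sum DERIV_cmult_right G_deriv[OF assms(1,2) z])
    moreover have "(\<Sum>i\<le>length ws. (om j z * G om a (take i ws) z) * F (drop i ws) a) = om j z * F ws z"
      using Cons.IH[OF z] by (simp add: nc_mult_def sum_distrib_left mult.assoc)
    ultimately show ?thesis unfolding R by simp
  qed
  have "F (j # ws) z = R z"
  proof (rule deriv_unique[OF F1 dR assms(2) Cons.prems])
    show "F (j # ws) a = R a" using G_basic[OF assms(1,2)] unfolding R by simp
  qed auto
  then show ?case by (simp add: R_def)
qed

lemma G_chen:
  assumes "holo om" "a \<in> upper_half" "b \<in> upper_half" "z \<in> upper_half"
  shows "G om b ws z = nc_mult (\<lambda>v. G om a v z) (\<lambda>v. G om b v a) ws"
  by (rule G_char[OF assms(1,2) _ _ assms(4)]) (simp, rule G_deriv[OF assms(1,3)])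

lemma G_inv:
  assumes "holo om" "a \<in> upper_half" "b \<in> upper_half"
  shows "nc_mult (\<lambda>v. G om a v b) (\<lambda>v. G om b v a) = nc_one"
  using G_chen[OF assms(1,2,3,3)] G_base[OF assms(1,3)] by (intro ext) simp

lemma deriv_mob:
  assumes "a * d - b * c = 1" "z \<in> upper_half"
  shows "(mob a b c d has_field_derivative 1 / (of_int c * z + of_int d)^2) (at z)"
proof -
  have n: "of_int c * z + of_int d \<noteq> 0" using denom_nz[OF assms(1)] assms(2) by (simp add: in_H)
  have "(mob a b c d has_field_derivative
      (of_int a * (of_int c * z + of_int d) - (of_int a * z + of_int b) * of_int c) / (of_int c * z + of_int d)^2) (at z)"
    unfolding mob_def using n by (auto intro!: derivative_eq_intros simp: power2_eq_square)
  moreover have "of_int a * (of_int c * z + of_int d) - (of_int a * z + of_int b) * of_int c = (of_int (a * d - b * c) :: complex)"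
    by (simp add: algebra_simps)
  ultimately show ?thesis using assms(1) by simp
qed

lemma G_transform:
  assumes "holo om" "holo om'" "a * d - b * c = 1" "x \<in> upper_half" "z \<in> upper_half"
    and tr: "\<And>j z. z \<in> upper_half \<Longrightarrow> om' j z = om j (mob a b c d z) / (of_int c * z + of_int d)^2"
  shows "G om (mob a b c d x) ws (mob a b c d z) = G om' x ws z"
proof -
  define F where "F = (\<lambda>ws z. G om (mob a b c d x) ws (mob a b c d z))"
  have mH: "\<And>z. z \<in> upper_half \<Longrightarrow> mob a b c d z \<in> upper_half" using mob_H[OF assms(3)] by blast
  have "F ws z = nc_mult (\<lambda>v. G om' x v z) (\<lambda>v. F v x) ws"
  proof (rule G_char[OF assms(2,4) _ _ assms(5)])
    show "F [] z = 1" for z by (simp add: F_def)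
    fix j ws z assume z: "z \<in> upper_half"
    have "((\<lambda>z. G om (mob a b c d x) (j # ws) (mob a b c d z)) has_field_derivative
        (om j (mob a b c d z) * G om (mob a b c d x) ws (mob a b c d z)) * (1 / (of_int c * z + of_int d)^2)) (at z)"
      by (rule DERIV_chain2[OF G_deriv[OF assms(1) mH[OF assms(4)] mH[OF z]] deriv_mob[OF assms(3) z]])
    then show "(F (j # ws) has_field_derivative om' j z * F ws z) (at z)"
      unfolding F_def tr[OF z] by (simp add: field_simps)
  qed
  also have "(\<lambda>v. F v x) = nc_one"
    using G_base[OF assms(1) mH[OF assms(4)]] by (simp add: F_def)
  finally show ?thesis by (simp add: F_def)
qed

lemma basis_cusp: "cusp_form_basis k r \<phi> \<Longrightarrow> j < r \<Longrightarrow> cusp_form k (\<phi> j)"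
  by (simp add: cusp_form_basis_def)

lemma Omega_holo:
  assumes "cusp_form_basis k r \<phi>"
  shows "holo (Omega \<phi> r w p q)"
  unfolding holo_def Omega_def
proof
  fix j
  show "(\<lambda>z. if j < r then \<phi> j z * (of_int p * z - of_int q) ^ w else 0) holomorphic_on upper_half"
  proof (cases "j < r")
    case True
    then have "\<phi> j holomorphic_on upper_half" using basis_cusp[OF assms True] by (simp add: cusp_form_def)
    then show ?thesis using True by (auto intro!: holomorphic_intros)
  qed simp
qed

lemma Omega_neg:
  assumes "even w"
  shows "Omega \<phi> r w (-p) (-q) = Omega \<phi> r w p q" "Omega \<phi> r w p (-q) = Omega \<phi> r w (-p) q"
proof -
  have sw: "\<And>u v :: complex. (u - v) ^ w = (v - u) ^ w"
    using assms by (metis minus_diff_eq power_minus_even)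
  have "(- (of_int p) * z + of_int q) ^ w = (of_int p * z - of_int q) ^ w" for z :: complex
    using sw[of "of_int q" "of_int p * z"] by (simp add: algebra_simps)
  moreover have "(of_int p * z + of_int q) ^ w = (- (of_int p) * z - of_int q) ^ w" for z :: complex
  proof -
    have "(- (of_int p) * z - of_int q)^w = (- (of_int p * z + of_int q))^w"
      by (rule arg_cong[where f="\<lambda>t. t^w"]) simp
    also have "\<dots> = (of_int p * z + of_int q)^w" using assms by (rule power_minus_even)
    finally show ?thesis by simp
  qed
  ultimately show "Omega \<phi> r w (-p) (-q) = Omega \<phi> r w p q" "Omega \<phi> r w p (-q) = Omega \<phi> r w (-p) q"
    unfolding Omega_def by (auto intro!: ext)
qed

lemma Omega_transform:
  assumes "cusp_form_basis (w + 2) r \<phi>" "even w" "a * d - b * c = 1" "z \<in> upper_half"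
  shows "Omega \<phi> r w p q j (mob a b c d z) / (of_int c * z + of_int d)^2 =
         Omega \<phi> r w (p*a - q*c) (q*d - p*b) j z"
proof (cases "j < r")
  case True
  have n: "of_int c * z + of_int d \<noteq> 0" using denom_nz[OF assms(3)] assms(4) by (simp add: in_H)
  have ev: "even (w + 2)" using assms(2) by simp
  have m: "\<phi> j (mob a b c d z) = (of_int c * z + of_int d) ^ (w+2) * \<phi> j z"
    using modular_all[OF basis_cusp[OF assms(1) True] ev assms(3)] assms(4) by (simp add: modular_def)
  have l: "(of_int p * mob a b c d z - of_int q) * (of_int c * z + of_int d) =
      of_int (p*a - q*c) * z - of_int (q*d - p*b)"
    using n unfolding mob_def by (simp add: divide_simps; simp add: algebra_simps)
  have "Omega \<phi> r w p q j (mob a b c d z) / (of_int c * z + of_int d)^2 =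
     (of_int c * z + of_int d) ^ (w+2) * \<phi> j z * (of_int p * mob a b c d z - of_int q) ^ w / (of_int c * z + of_int d)^2"
    using True by (simp add: Omega_def m)
  also have "\<dots> = \<phi> j z * ((of_int p * mob a b c d z - of_int q) * (of_int c * z + of_int d)) ^ w"
  proof -
    define X where "X = of_int c * z + of_int d"
    define Y where "Y = of_int p * mob a b c d z - of_int q"
    have X: "X \<noteq> 0" using n by (simp add: X_def)
    have e: "X ^ (w+2) * \<phi> j z * Y ^ w = (\<phi> j z * (Y * X) ^ w) * X^2"
      by (simp add: power_add power_mult_distrib algebra_simps power2_eq_square)
    have "X ^ (w+2) * \<phi> j z * Y ^ w / X^2 = \<phi> j z * (Y * X) ^ w"
      unfolding e using X by simp
    then show ?thesis by (simp add: X_def Y_def)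
  qed
  also have "\<dots> = Omega \<phi> r w (p*a - q*c) (q*d - p*b) j z"
    using True by (simp add: l Omega_def)
  finally show ?thesis .
qed (simp add: Omega_def)

definition decays :: "(nat \<Rightarrow> complex \<Rightarrow> complex) \<Rightarrow> bool" where
  "decays om \<longleftrightarrow> (\<forall>M\<ge>0. \<exists>K Y. Y > 0 \<and> K \<ge> 0 \<and>
     (\<forall>j z. \<bar>Re z\<bar> \<le> M \<longrightarrow> Im z \<ge> Y \<longrightarrow> cmod (om j z) \<le> K * exp (- Im z)))"

lemma le_exp_self: "(t::real) \<le> exp t"
  using exp_ge_add_one_self[of t] by linarith

lemma Omega_decays:
  assumes "cusp_form_basis k r \<phi>"
  shows "decays (Omega \<phi> r w p q)"
  unfolding decays_def
proof (intro allI impI)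
  fix M :: real assume M: "M \<ge> 0"
  have "\<forall>j. \<exists>CY. j < r \<longrightarrow> (snd CY > 0 \<and> (\<forall>z. Im z \<ge> snd CY \<longrightarrow> cmod (\<phi> j z) \<le> fst CY * exp (- 2 * pi * Im z)))"
    using cusp_decay[OF basis_cusp[OF assms]] by fastforce
  then obtain CY where CY: "\<And>j. j < r \<Longrightarrow> snd (CY j) > 0 \<and> (\<forall>z. Im z \<ge> snd (CY j) \<longrightarrow> cmod (\<phi> j z) \<le> fst (CY j) * exp (- 2 * pi * Im z))"
    by metis
  define Cm where "Cm = (\<Sum>j<r. \<bar>fst (CY j)\<bar>)"
  define Ym where "Ym = 1 + (\<Sum>j<r. snd (CY j))"
  define P where "P = \<bar>of_int p\<bar> * M + \<bar>of_int q\<bar> + \<bar>of_int p\<bar> * (real w + 1)"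
  have Cm0: "Cm \<ge> 0" by (simp add: Cm_def sum_nonneg)
  have P0: "P \<ge> 0" using M by (simp add: P_def)
  have Ym: "snd (CY j) \<le> Ym" if "j < r" for j
  proof -
    have "snd (CY j) \<le> (\<Sum>j<r. snd (CY j))"
      by (rule member_le_sum) (use that CY in \<open>auto intro: less_imp_le\<close>)
    then show ?thesis by (simp add: Ym_def)
  qed
  have "0 \<le> (\<Sum>j<r. snd (CY j))" by (rule sum_nonneg) (use CY in \<open>auto intro: less_imp_le\<close>)
  then have Ym1: "Ym \<ge> 1" unfolding Ym_def by simp
  show "\<exists>K Y. Y > 0 \<and> K \<ge> 0 \<and> (\<forall>j z. \<bar>Re z\<bar> \<le> M \<longrightarrow> Im z \<ge> Y \<longrightarrow> cmod (Omega \<phi> r w p q j z) \<le> K * exp (- Im z))"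
  proof (intro exI conjI allI impI)
    show "Ym > 0" using Ym1 by simp
    show "Cm * P ^ w \<ge> 0" using Cm0 P0 by simp
    fix j z assume Re: "\<bar>Re z\<bar> \<le> M" and Im: "Im z \<ge> Ym"
    show "cmod (Omega \<phi> r w p q j z) \<le> Cm * P ^ w * exp (- Im z)"
    proof (cases "j < r")
      case False then show ?thesis using Cm0 P0 by (simp add: Omega_def)
    next
      case True
      define y where "y = Im z"
      have y1: "y \<ge> 1" using Im Ym1 by (simp add: y_def)
      define e where "e = exp (y / (real w + 1))"
      have e1: "e \<ge> 1" unfolding e_def using y1 by simp
      have phi: "cmod (\<phi> j z) \<le> Cm * exp (- 2 * pi * y)"
      proof -
        have "cmod (\<phi> j z) \<le> fst (CY j) * exp (- 2 * pi * y)"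
          using CY[OF True] Ym[OF True] Im by (simp add: y_def)
        also have "\<dots> \<le> Cm * exp (- 2 * pi * y)"
        proof (rule mult_right_mono)
          have "fst (CY j) \<le> \<bar>fst (CY j)\<bar>" by simp
          also have "\<dots> \<le> Cm" unfolding Cm_def by (rule member_le_sum) (use True in auto)
          finally show "fst (CY j) \<le> Cm" .
        qed simp
        finally show ?thesis .
      qed
      have lin: "cmod (of_int p * z - of_int q) \<le> P * e"
      proof -
        have "cmod (of_int p * z - of_int q) \<le> cmod (of_int p * z) + cmod (of_int q :: complex)"
          by (rule norm_triangle_ineq4)
        also have "cmod (of_int p * z) = \<bar>of_int p\<bar> * cmod z" by (simp add: norm_mult)
        finally have a0: "cmod (of_int p * z - of_int q) \<le> \<bar>of_int p\<bar> * cmod z + \<bar>of_int q\<bar>"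
          by (simp add: norm_of_int)
        have "\<bar>of_int p\<bar> * cmod z \<le> \<bar>of_int p\<bar> * (M + y)"
          by (rule mult_left_mono) (use cmod_le[of z] Re y1 in \<open>simp_all add: y_def\<close>)
        then have a: "cmod (of_int p * z - of_int q) \<le> \<bar>of_int p\<bar> * (M + y) + \<bar>of_int q\<bar>"
          using a0 by linarith
        have b: "\<bar>of_int p\<bar> * M + \<bar>of_int q\<bar> \<le> (\<bar>of_int p\<bar> * M + \<bar>of_int q\<bar>) * e"
          using mult_left_mono[OF e1, of "\<bar>of_int p\<bar> * M + \<bar>of_int q\<bar>"] M by simp
        have "y = (real w + 1) * (y / (real w + 1))" by simp
        also have "\<dots> \<le> (real w + 1) * e" unfolding e_def
          by (rule mult_left_mono[OF le_exp_self]) simp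
        finally have c: "\<bar>of_int p\<bar> * y \<le> \<bar>of_int p\<bar> * ((real w + 1) * e)"
          by (rule mult_left_mono) simp
        show ?thesis using a b c unfolding P_def by (simp add: algebra_simps)
      qed
      have pw: "cmod (of_int p * z - of_int q) ^ w \<le> P ^ w * exp (real w * y / (real w + 1))"
      proof -
        have "cmod (of_int p * z - of_int q) ^ w \<le> (P * e) ^ w" by (rule power_mono[OF lin]) simp
        also have "(P * e) ^ w = P ^ w * exp (real w * y / (real w + 1))" unfolding e_def
          by (simp add: power_mult_distrib exp_of_nat_mult[symmetric])
        finally show ?thesis .
      qed
      have ex: "exp (- 2 * pi * y) * exp (real w * y / (real w + 1)) \<le> exp (- y)"
      proof -
        have "real w * y \<le> y * (real w + 1)" using y1 by (simp add: algebra_simps)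
        then have "real w * y / (real w + 1) \<le> y"
          by (subst pos_divide_le_eq) simp_all
        moreover have "- 2 * pi * y \<le> - 2 * y" using y1 pi_gt3 by simp
        ultimately show ?thesis by (simp add: exp_add[symmetric])
      qed
      have "cmod (Omega \<phi> r w p q j z) = cmod (\<phi> j z) * cmod (of_int p * z - of_int q) ^ w"
        using True by (simp add: Omega_def norm_mult norm_power)
      also have "\<dots> \<le> (Cm * exp (- 2 * pi * y)) * (P ^ w * exp (real w * y / (real w + 1)))"
        by (rule mult_mono[OF phi pw]) (use Cm0 in simp_all)
      also have "\<dots> = Cm * P ^ w * (exp (- 2 * pi * y) * exp (real w * y / (real w + 1)))" by simp
      also have "\<dots> \<le> Cm * P ^ w * exp (- y)"
        by (rule mult_left_mono[OF ex]) (use Cm0 P0 in simp)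
      finally show ?thesis by (simp add: y_def)
    qed
  qed
qed

lemma real_bound:
  fixes h :: "real \<Rightarrow> complex"
  assumes "a \<le> b"
    and hd: "\<And>s. s \<in> {a..b} \<Longrightarrow> (h has_vector_derivative h' s) (at s within {a..b})"
    and gd: "\<And>s. s \<in> {a..b} \<Longrightarrow> (g has_real_derivative g' s) (at s within {a..b})"
    and le: "\<And>s. s \<in> {a..b} \<Longrightarrow> norm (h' s) \<le> g' s"
  shows "norm (h b - h a) \<le> g b - g a"
proof -
  have i1: "(h' has_integral (h b - h a)) {a..b}"
    by (rule fundamental_theorem_of_calculus[OF assms(1) hd])
  have i2: "(g' has_integral (g b - g a)) {a..b}"
    by (rule fundamental_theorem_of_calculus[OF assms(1)])
       (use gd in \<open>simp add: has_real_derivative_iff_has_vector_derivative\<close>)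
  have "norm (integral {a..b} h') \<le> integral {a..b} g'"
    by (rule integral_norm_bound_integral) (use i1 i2 le in \<open>auto simp: has_integral_integrable\<close>)
  then show ?thesis using i1 i2 by (simp add: integral_unique)
qed

lemma vd_vert:
  assumes "(F has_field_derivative D) (at (Complex x s))"
  shows "((\<lambda>s. F (Complex x s)) has_vector_derivative D * \<i>) (at s within S)"
proof -
  have e: "\<And>s. Complex x s = of_real x + \<i> * of_real s" by (simp add: complex_eq_iff)
  have d: "((\<lambda>u. of_real x + \<i> * u) has_field_derivative \<i>) (at (of_real s))"
    by (auto intro!: derivative_eq_intros)
  have "((\<lambda>u. F (of_real x + \<i> * u)) has_field_derivative D * \<i>) (at (of_real s))"
    by (rule DERIV_chain2[OF _ d]) (use assms in \<open>simp add: e\<close>)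
  from has_vector_derivative_real_field[OF this] show ?thesis unfolding e .
qed

lemma vd_hor:
  assumes "(F has_field_derivative D) (at (Complex t y))"
  shows "((\<lambda>t. F (Complex t y)) has_vector_derivative D) (at t within S)"
proof -
  have e: "\<And>t. Complex t y = of_real t + \<i> * of_real y" by (simp add: complex_eq_iff)
  have d: "((\<lambda>u. u + \<i> * of_real y) has_field_derivative 1) (at (of_real t))"
    by (auto intro!: derivative_eq_intros)
  have "((\<lambda>u. F (u + \<i> * of_real y)) has_field_derivative D * 1) (at (of_real t))"
    by (rule DERIV_chain2[OF _ d]) (use assms in \<open>simp add: e\<close>)
  from has_vector_derivative_real_field[OF this] show ?thesis unfolding e by simp
qed

lemma prod_bound:
  assumes "\<And>v. cmod (A v) \<le> \<alpha> ^ length v" "\<And>v. cmod (B v) \<le> \<beta> ^ length v" "\<alpha> \<ge> 0" "\<beta> \<ge> 0"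
  shows "cmod (nc_mult A B ws) \<le> (\<alpha> + \<beta>) ^ length ws"
proof -
  have "cmod (nc_mult A B ws) \<le> (\<Sum>i\<le>length ws. cmod (A (take i ws) * B (drop i ws)))"
    unfolding nc_mult_def by (rule norm_sum)
  also have "\<dots> \<le> (\<Sum>i\<le>length ws. \<alpha> ^ i * \<beta> ^ (length ws - i))"
  proof (rule sum_mono)
    fix i assume "i \<in> {..length ws}"
    then have "length (take i ws) = i" "length (drop i ws) = length ws - i" by auto
    then show "cmod (A (take i ws) * B (drop i ws)) \<le> \<alpha> ^ i * \<beta> ^ (length ws - i)"
      unfolding norm_mult using assms(1)[of "take i ws"] assms(2)[of "drop i ws"]
      by (intro mult_mono) (auto simp: assms(3))
  qed
  also have "\<dots> \<le> (\<Sum>i\<le>length ws. of_nat (length ws choose i) * \<alpha> ^ i * \<beta> ^ (length ws - i))"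
  proof (rule sum_mono)
    fix i assume i: "i \<in> {..length ws}"
    have "0 < length ws choose i" using i by simp
    then have "1 \<le> real (length ws choose i)" by linarith
    then show "\<alpha> ^ i * \<beta> ^ (length ws - i) \<le> of_nat (length ws choose i) * \<alpha> ^ i * \<beta> ^ (length ws - i)"
      using mult_right_mono[OF \<open>1 \<le> real (length ws choose i)\<close>, of "\<alpha> ^ i * \<beta> ^ (length ws - i)"] assms(3,4)
      by (simp add: mult.assoc)
  qed
  also have "\<dots> = (\<alpha> + \<beta>) ^ length ws"
    by (simp add: binomial_ring atMost_atLeast0)
  finally show ?thesis .
qed

lemma prod_bound_mono:
  assumes "\<And>v. cmod (A v) \<le> \<alpha> ^ length v" "\<alpha> \<ge> 0" "\<alpha> \<le> \<alpha>'"
  shows "cmod (A v) \<le> \<alpha>' ^ length v"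
  using assms(1)[of v] power_mono[OF assms(3,2), of "length v"] by linarith

lemma cH: "s > 0 \<Longrightarrow> Complex x s \<in> upper_half" by (simp add: in_H)

lemma vert_bound:
  assumes ho: "holo om" and K: "K \<ge> 0" and Y: "Y > 0"
    and dec: "\<And>j \<zeta>. \<bar>Re \<zeta>\<bar> \<le> M \<Longrightarrow> Im \<zeta> \<ge> Y \<Longrightarrow> cmod (om j \<zeta>) \<le> K * exp (- Im \<zeta>)"
    and x: "\<bar>x\<bar> \<le> M" and y1: "y1 \<ge> Y"
  shows "\<forall>y. y \<ge> Y \<longrightarrow> cmod (G om (Complex x y1) ws (Complex x y)) \<le> (K * exp (- Y)) ^ length ws"
proof (induction ws)
  case Nil then show ?case by simp
next
  case (Cons j ws)
  define z1 where "z1 = Complex x y1"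
  have z1: "z1 \<in> upper_half" unfolding z1_def using y1 Y by (intro cH) simp
  define \<mu> where "\<mu> = K * exp (- Y)"
  have \<mu>0: "\<mu> \<ge> 0" using K by (simp add: \<mu>_def)
  define C where "C = K * \<mu> ^ length ws"
  have C0: "C \<ge> 0" using K \<mu>0 by (simp add: C_def)
  define h where "h = (\<lambda>s. G om z1 (j # ws) (Complex x s))"
  define h' where "h' = (\<lambda>s. om j (Complex x s) * G om z1 ws (Complex x s) * \<i>)"
  define g where "g = (\<lambda>s. - C * exp (- s))"
  have hd: "(h has_vector_derivative h' s) (at s within S)" if "s \<ge> Y" for s S
    unfolding h_def h'_def
    by (rule vd_vert[OF G_deriv[OF ho z1 cH]]) (use that Y in simp)
  have gd: "(g has_real_derivative C * exp (- s)) (at s within S)" for s S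
    unfolding g_def by (auto intro!: derivative_eq_intros)
  have le: "norm (h' s) \<le> C * exp (- s)" if "s \<ge> Y" for s
  proof -
    have "norm (h' s) = cmod (om j (Complex x s)) * cmod (G om z1 ws (Complex x s))"
      by (simp add: h'_def norm_mult)
    also have "\<dots> \<le> (K * exp (- s)) * \<mu> ^ length ws"
      by (rule mult_mono) (use dec[of "Complex x s"] x that Cons.IH \<mu>_def z1_def K in auto)
    finally show ?thesis by (simp add: C_def mult_ac)
  qed
  have h0: "h y1 = 0" using G_basic[OF ho z1] by (simp add: h_def z1_def)
  show ?case
  proof (intro allI impI)
    fix y assume y: "y \<ge> Y"
    have main: "norm (h y) \<le> C * exp (- Y)"
    proof (cases "y \<le> y1")
      case True
      have "norm (h y1 - h y) \<le> g y1 - g y"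
        by (rule real_bound[OF True, where h'=h' and g'="\<lambda>s. C * exp (- s)"]) (use hd gd le y in auto)
      moreover have "g y1 - g y \<le> C * exp (- Y)"
      proof -
        have "C * exp (- y) \<le> C * exp (- Y)" using C0 y by (intro mult_left_mono) auto
        moreover have "0 \<le> C * exp (- y1)" using C0 by simp
        ultimately show ?thesis by (simp add: g_def)
      qed
      ultimately show ?thesis using h0 by (simp add: norm_minus_commute)
    next
      case False
      have "norm (h y - h y1) \<le> g y - g y1"
        by (rule real_bound[where h'=h' and g'="\<lambda>s. C * exp (- s)"]) (use False hd gd le y1 in auto)
      moreover have "g y - g y1 \<le> C * exp (- Y)"
      proof -
        have "C * exp (- y1) \<le> C * exp (- Y)" using C0 y1 by (intro mult_left_mono) auto
        moreover have "0 \<le> C * exp (- y)" using C0 by simp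
        ultimately show ?thesis by (simp add: g_def)
      qed
      ultimately show ?thesis using h0 by simp
    qed
    have eq: "C * exp (- Y) = \<mu> ^ length (j # ws)" by (simp add: C_def \<mu>_def mult_ac)
    show "cmod (G om (Complex x y1) (j # ws) (Complex x y)) \<le> (K * exp (- Y)) ^ length (j # ws)"
      using main[unfolded eq] unfolding h_def z1_def \<mu>_def by simp
  qed
qed

lemma hor_bound:
  assumes ho: "holo om" and K: "K \<ge> 0" and Y: "Y > 0"
    and dec: "\<And>j \<zeta>. \<bar>Re \<zeta>\<bar> \<le> M \<Longrightarrow> Im \<zeta> \<ge> Y \<Longrightarrow> cmod (om j \<zeta>) \<le> K * exp (- Im \<zeta>)"
    and x1: "\<bar>x1\<bar> \<le> M" and y: "y \<ge> Y"
  shows "\<forall>t. \<bar>t\<bar> \<le> M \<longrightarrow> cmod (G om (Complex x1 y) ws (Complex t y)) \<le> (K * exp (- Y) * \<bar>t - x1\<bar>) ^ length ws"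
proof (induction ws)
  case Nil then show ?case by simp
next
  case (Cons j ws)
  define z1 where "z1 = Complex x1 y"
  have z1: "z1 \<in> upper_half" unfolding z1_def using y Y by (intro cH) simp
  define \<mu> where "\<mu> = K * exp (- Y)"
  have \<mu>0: "\<mu> \<ge> 0" using K by (simp add: \<mu>_def)
  show ?case
  proof (intro allI impI)
    fix t assume t: "\<bar>t\<bar> \<le> M"
    define B where "B = \<mu> * (\<mu> * \<bar>t - x1\<bar>) ^ length ws"
    define h where "h = (\<lambda>s. G om z1 (j # ws) (Complex s y))"
    define h' where "h' = (\<lambda>s. om j (Complex s y) * G om z1 ws (Complex s y))"
    have hd: "(h has_vector_derivative h' s) (at s within S)" for s S
      unfolding h_def h'_def
      by (rule vd_hor[OF G_deriv[OF ho z1 cH]]) (use y Y in simp)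
    have gd: "((\<lambda>s. B * s) has_real_derivative B) (at s within S)" for s S
      by (auto intro!: derivative_eq_intros)
    have le: "norm (h' s) \<le> B" if "s \<in> {min t x1..max t x1}" for s
    proof -
      have s1: "\<bar>s\<bar> \<le> M" "\<bar>s - x1\<bar> \<le> \<bar>t - x1\<bar>" using that t x1 by (auto simp: abs_if split: if_splits)
      have "norm (h' s) = cmod (om j (Complex s y)) * cmod (G om z1 ws (Complex s y))"
        by (simp add: h'_def norm_mult)
      also have "\<dots> \<le> \<mu> * (\<mu> * \<bar>t - x1\<bar>) ^ length ws"
      proof (rule mult_mono)
        show "cmod (om j (Complex s y)) \<le> \<mu>"
        proof -
          have "cmod (om j (Complex s y)) \<le> K * exp (- y)" using dec[of "Complex s y"] s1 y by simp
          also have "\<dots> \<le> K * exp (- Y)" using K y by (intro mult_left_mono) auto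
          finally show ?thesis unfolding \<mu>_def .
        qed
        have "cmod (G om z1 ws (Complex s y)) \<le> (\<mu> * \<bar>s - x1\<bar>) ^ length ws"
          using Cons.IH s1 by (simp add: z1_def \<mu>_def)
        also have "\<dots> \<le> (\<mu> * \<bar>t - x1\<bar>) ^ length ws"
          by (rule power_mono) (use s1 \<mu>0 in \<open>auto intro: mult_left_mono\<close>)
        finally show "cmod (G om z1 ws (Complex s y)) \<le> (\<mu> * \<bar>t - x1\<bar>) ^ length ws" .
      qed (use \<mu>0 in auto)
      finally show ?thesis by (simp add: B_def)
    qed
    have h0: "h x1 = 0" using G_basic[OF ho z1] by (simp add: h_def z1_def)
    have main: "norm (h t) \<le> B * \<bar>t - x1\<bar>"
    proof (cases "t \<le> x1")
      case True
      have "norm (h x1 - h t) \<le> B * x1 - B * t"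
        by (rule real_bound[OF True, where h'=h' and g'="\<lambda>s. B"]) (use hd gd le True in \<open>auto simp: min_def max_def\<close>)
      then show ?thesis using h0 True by (simp add: norm_minus_commute right_diff_distrib abs_if)
    next
      case False
      have "norm (h t - h x1) \<le> B * t - B * x1"
        by (rule real_bound[where h'=h' and g'="\<lambda>s. B"]) (use hd gd le False in \<open>auto simp: min_def max_def\<close>)
      then show ?thesis using h0 False by (simp add: right_diff_distrib abs_if)
    qed
    have eq: "B * \<bar>t - x1\<bar> = (\<mu> * \<bar>t - x1\<bar>) ^ length (j # ws)" by (simp add: B_def mult_ac)
    show "cmod (G om (Complex x1 y) (j # ws) (Complex t y)) \<le> (K * exp (- Y) * \<bar>t - x1\<bar>) ^ length (j # ws)"
      using main[unfolded eq] unfolding h_def z1_def \<mu>_def by simp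
  qed
qed

lemma region_bound:
  assumes ho: "holo om" and K: "K \<ge> 0" and Y: "Y > 0" and M: "M \<ge> 0"
    and dec: "\<And>j \<zeta>. \<bar>Re \<zeta>\<bar> \<le> M \<Longrightarrow> Im \<zeta> \<ge> Y \<Longrightarrow> cmod (om j \<zeta>) \<le> K * exp (- Im \<zeta>)"
    and x: "\<bar>x1\<bar> \<le> M" "\<bar>x2\<bar> \<le> M" and y: "y1 \<ge> Y" "y2 \<ge> Y"
  shows "cmod (G om (Complex x1 y1) ws (Complex x2 y2)) \<le> ((2 + 2 * M) * K * exp (- Y)) ^ length ws"
proof -
  define Ht where "Ht = max y1 y2"
  have Ht: "Ht \<ge> Y" using y by (simp add: Ht_def)
  define \<mu> where "\<mu> = K * exp (- Y)"
  have \<mu>0: "\<mu> \<ge> 0" using K by (simp add: \<mu>_def)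
  have H1: "Complex x1 y1 \<in> upper_half" "Complex x2 y2 \<in> upper_half" "Complex x1 Ht \<in> upper_half"
    "Complex x2 Ht \<in> upper_half" using y Y Ht by (auto intro!: cH)
  have v1: "cmod (G om (Complex x1 y1) v (Complex x1 Ht)) \<le> \<mu> ^ length v" for v
    using vert_bound[OF ho K Y dec x(1) y(1)] Ht by (simp add: \<mu>_def)
  have v2: "cmod (G om (Complex x2 Ht) v (Complex x2 y2)) \<le> \<mu> ^ length v" for v
    using vert_bound[OF ho K Y dec x(2) Ht] y by (simp add: \<mu>_def)
  have h: "cmod (G om (Complex x1 Ht) v (Complex x2 Ht)) \<le> (2 * M * \<mu>) ^ length v" for v
  proof -
    have "cmod (G om (Complex x1 Ht) v (Complex x2 Ht)) \<le> (\<mu> * \<bar>x2 - x1\<bar>) ^ length v"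
      using hor_bound[OF ho K Y dec x(1) Ht] x(2) by (simp add: \<mu>_def)
    also have "\<dots> \<le> (2 * M * \<mu>) ^ length v"
      by (rule power_mono) (use x \<mu>0 in \<open>auto simp: mult.commute intro!: mult_left_mono\<close>)
    finally show ?thesis .
  qed
  have inner: "cmod (G om (Complex x1 Ht) v (Complex x2 y2)) \<le> (\<mu> + 2 * M * \<mu>) ^ length v" for v
  proof -
    have "G om (Complex x1 Ht) v (Complex x2 y2) =
      nc_mult (\<lambda>u. G om (Complex x2 Ht) u (Complex x2 y2)) (\<lambda>u. G om (Complex x1 Ht) u (Complex x2 Ht)) v"
      by (rule G_chen[OF ho H1(4) H1(3) H1(2)])
    also have "cmod \<dots> \<le> (\<mu> + 2 * M * \<mu>) ^ length v"
      by (rule prod_bound[OF v2 h \<mu>0]) (use M \<mu>0 in simp)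
    finally show ?thesis .
  qed
  have "G om (Complex x1 y1) ws (Complex x2 y2) =
      nc_mult (\<lambda>v. G om (Complex x1 Ht) v (Complex x2 y2)) (\<lambda>v. G om (Complex x1 y1) v (Complex x1 Ht)) ws"
    by (rule G_chen[OF ho H1(3) H1(1) H1(2)])
  also have "cmod \<dots> \<le> ((\<mu> + 2 * M * \<mu>) + \<mu>) ^ length ws"
    by (rule prod_bound[OF inner v1]) (use M \<mu>0 in simp_all)
  also have "(\<mu> + 2 * M * \<mu>) + \<mu> = (2 + 2 * M) * K * exp (- Y)"
    by (simp add: \<mu>_def algebra_simps)
  finally show ?thesis .
qed

lemma G_unif:
  assumes ho: "holo om" and dc: "decays om" and b: "b \<in> upper_half" and M: "M \<ge> 0" and e: "\<epsilon> > 0"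
  shows "\<exists>Y. \<forall>x1 y1 x2 y2. \<bar>x1\<bar> \<le> M \<longrightarrow> \<bar>x2\<bar> \<le> M \<longrightarrow> y1 \<ge> Y \<longrightarrow> y2 \<ge> Y \<longrightarrow>
     cmod (G om b ws (Complex x2 y2) - G om b ws (Complex x1 y1)) < \<epsilon>"
proof -
  obtain K Y0 where Y0: "Y0 > 0" and K: "K \<ge> 0"
    and dec: "\<And>j \<zeta>. \<bar>Re \<zeta>\<bar> \<le> M \<Longrightarrow> Im \<zeta> \<ge> Y0 \<Longrightarrow> cmod (om j \<zeta>) \<le> K * exp (- Im \<zeta>)"
    using dc M unfolding decays_def by blast
  define c where "c = (2 + 2 * M) * K"
  have c0: "c \<ge> 0" using M K by (simp add: c_def)
  have RB: "cmod (G om (Complex x1 y1) v (Complex x2 y2)) \<le> (c * exp (- Y)) ^ length v"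
    if "\<bar>x1\<bar> \<le> M" "\<bar>x2\<bar> \<le> M" "y1 \<ge> Y" "y2 \<ge> Y" "Y \<ge> Y0" for x1 y1 x2 y2 Y v
  proof -
    have dec': "\<And>j \<zeta>. \<bar>Re \<zeta>\<bar> \<le> M \<Longrightarrow> Im \<zeta> \<ge> Y \<Longrightarrow> cmod (om j \<zeta>) \<le> K * exp (- Im \<zeta>)"
      using dec that(5) by force
    show ?thesis using region_bound[OF ho K _ M dec' that(1-4)] Y0 that(5) by (simp add: c_def)
  qed
  define z0 where "z0 = Complex 0 Y0"
  have z0: "z0 \<in> upper_half" using Y0 by (simp add: z0_def in_H)
  define Bd where "Bd = (\<lambda>v. \<Sum>k\<le>length v. (c * exp (- Y0)) ^ k * cmod (G om b (drop k v) z0))"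
  have bd: "cmod (G om b v (Complex x1 y1)) \<le> Bd v" if "\<bar>x1\<bar> \<le> M" "y1 \<ge> Y0" for v x1 y1
  proof -
    have z1: "Complex x1 y1 \<in> upper_half" using that Y0 by (simp add: in_H)
    have "G om b v (Complex x1 y1) = nc_mult (\<lambda>u. G om z0 u (Complex x1 y1)) (\<lambda>u. G om b u z0) v"
      by (rule G_chen[OF ho z0 b z1])
    also have "cmod \<dots> \<le> (\<Sum>k\<le>length v. cmod (G om z0 (take k v) (Complex x1 y1) * G om b (drop k v) z0))"
      unfolding nc_mult_def by (rule norm_sum)
    also have "\<dots> \<le> Bd v" unfolding Bd_def
    proof (rule sum_mono)
      fix k assume k: "k \<in> {..length v}"
      have "cmod (G om z0 (take k v) (Complex x1 y1)) \<le> (c * exp (- Y0)) ^ length (take k v)"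
        unfolding z0_def by (rule RB) (use that M in auto)
      also have "length (take k v) = k" using k by simp
      finally show "cmod (G om z0 (take k v) (Complex x1 y1) * G om b (drop k v) z0)
          \<le> (c * exp (- Y0)) ^ k * cmod (G om b (drop k v) z0)"
        unfolding norm_mult by (rule mult_right_mono) simp
    qed
    finally show ?thesis .
  qed
  define S where "S = (\<Sum>i\<le>length ws. Bd (drop i ws))"
  have S0: "S \<ge> 0" unfolding S_def Bd_def using c0 by (intro sum_nonneg mult_nonneg_nonneg zero_le_power) auto
  define \<delta> where "\<delta> = min 1 (\<epsilon> / (2 * (S + 1)))"
  have \<delta>0: "\<delta> > 0" using e S0 by (simp add: \<delta>_def)
  define Y where "Y = max Y0 (- ln (\<delta> / (c + 1)))"
  have YY0: "Y \<ge> Y0" by (simp add: Y_def)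
  have small: "c * exp (- Y) \<le> \<delta>"
  proof -
    have "- Y \<le> ln (\<delta> / (c + 1))" by (simp add: Y_def)
    then have "exp (- Y) \<le> exp (ln (\<delta> / (c + 1)))" by simp
    also have "exp (ln (\<delta> / (c + 1))) = \<delta> / (c + 1)" using \<delta>0 c0 by simp
    finally have "exp (- Y) \<le> \<delta> / (c + 1)" .
    then have "c * exp (- Y) \<le> c * (\<delta> / (c + 1))" using c0 by (rule mult_left_mono)
    also have "\<dots> \<le> \<delta>" using c0 \<delta>0 by (simp add: field_simps)
    finally show ?thesis .
  qed
  have \<mu>1: "c * exp (- Y) \<le> 1" using small by (simp add: \<delta>_def)
  have \<mu>0: "c * exp (- Y) \<ge> 0" using c0 by simp
  show ?thesis
  proof (intro exI[of _ Y] allI impI)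
    fix x1 y1 x2 y2 assume h: "\<bar>x1\<bar> \<le> M" "\<bar>x2\<bar> \<le> M" "y1 \<ge> Y" "y2 \<ge> Y"
    define z1 where "z1 = Complex x1 y1"
    define z2 where "z2 = Complex x2 y2"
    have z1: "z1 \<in> upper_half" "z2 \<in> upper_half" using h YY0 Y0 by (auto simp: z1_def z2_def in_H)
    define f where "f = (\<lambda>i. G om z1 (take i ws) z2 * G om b (drop i ws) z1)"
    have "G om b ws z2 = (\<Sum>i\<le>length ws. f i)"
      using G_chen[OF ho z1(1) b z1(2)] by (simp add: nc_mult_def f_def)
    also have "\<dots> = f 0 + (\<Sum>i\<in>{..length ws} - {0}. f i)"
      by (rule sum.remove) auto
    also have "f 0 = G om b ws z1" by (simp add: f_def)
    finally have d: "G om b ws z2 - G om b ws z1 = (\<Sum>i\<in>{..length ws} - {0}. f i)" by simp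
    have "cmod (\<Sum>i\<in>{..length ws} - {0}. f i) \<le> (\<Sum>i\<in>{..length ws} - {0}. c * exp (- Y) * Bd (drop i ws))"
    proof (rule order_trans[OF norm_sum sum_mono])
      fix i assume i: "i \<in> {..length ws} - {0}"
      have "cmod (G om z1 (take i ws) z2) \<le> (c * exp (- Y)) ^ length (take i ws)"
        unfolding z1_def z2_def by (rule RB) (use h YY0 in auto)
      also have "\<dots> = (c * exp (- Y)) ^ i" using i by simp
      also have "\<dots> \<le> c * exp (- Y)" using i \<mu>0 \<mu>1 by (intro power_le_one_iff[THEN iffD2] power_decreasing[of 1 i, simplified]) auto
      finally have a: "cmod (G om z1 (take i ws) z2) \<le> c * exp (- Y)" .
      have b: "cmod (G om b (drop i ws) z1) \<le> Bd (drop i ws)"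
        unfolding z1_def by (rule bd) (use h YY0 in auto)
      show "cmod (f i) \<le> c * exp (- Y) * Bd (drop i ws)"
        unfolding f_def norm_mult by (rule mult_mono[OF a b]) (use \<mu>0 in auto)
    qed
    also have "\<dots> \<le> (\<Sum>i\<le>length ws. c * exp (- Y) * Bd (drop i ws))"
      by (rule sum_mono2) (use \<mu>0 c0 in \<open>auto simp: Bd_def intro!: mult_nonneg_nonneg sum_nonneg\<close>)
    also have "\<dots> = c * exp (- Y) * S" by (simp add: S_def sum_distrib_left)
    also have "\<dots> \<le> \<delta> * S" using small S0 by (rule mult_right_mono)
    also have "\<dots> \<le> \<epsilon> / (2 * (S + 1)) * S" using S0 by (intro mult_right_mono) (auto simp: \<delta>_def)
    also have "\<dots> < \<epsilon>" using S0 e by (simp add: field_simps add_nonneg_pos mult_nonneg_nonneg)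
    finally show "cmod (G om b ws (Complex x2 y2) - G om b ws (Complex x1 y1)) < \<epsilon>"
      using d by (simp add: z1_def z2_def)
  qed
qed

definition Linf :: "(nat \<Rightarrow> complex \<Rightarrow> complex) \<Rightarrow> complex \<Rightarrow> ncps" where
  "Linf om b = (\<lambda>ws. lim (\<lambda>n. G om b ws (Complex 0 (real n))))"

lemma Linf_tendsto:
  assumes ho: "holo om" and dc: "decays om" and b: "b \<in> upper_half"
  shows "((\<lambda>T. G om b ws (Complex x T)) \<longlongrightarrow> Linf om b ws) at_top"
proof -
  define s where "s = (\<lambda>n. G om b ws (Complex 0 (real n)))"
  have "Cauchy s"
    unfolding Cauchy_iff
  proof (intro allI impI)
    fix e :: real assume e: "e > 0"
    obtain Y where Y: "\<And>x1 y1 x2 y2. \<bar>x1\<bar> \<le> 0 \<Longrightarrow> \<bar>x2\<bar> \<le> 0 \<Longrightarrow> y1 \<ge> Y \<Longrightarrow> y2 \<ge> Y \<Longrightarrow>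
       cmod (G om b ws (Complex x2 y2) - G om b ws (Complex x1 y1)) < e"
      using G_unif[OF ho dc b _ e, of 0 ws] by auto
    show "\<exists>N. \<forall>m\<ge>N. \<forall>n\<ge>N. norm (s m - s n) < e"
    proof (intro exI allI impI)
      fix m n assume "nat \<lceil>Y\<rceil> \<le> m" "nat \<lceil>Y\<rceil> \<le> n"
      then have "real m \<ge> Y" "real n \<ge> Y" by linarith+
      then show "norm (s m - s n) < e" unfolding s_def using Y by simp
    qed
  qed
  then have L: "s \<longlonglongrightarrow> Linf om b ws"
    unfolding Linf_def s_def[symmetric] by (simp add: Cauchy_convergent_iff convergent_LIMSEQ_iff)
  show ?thesis
    unfolding tendsto_iff
  proof (intro allI impI)
    fix e :: real assume e: "e > 0"
    obtain Y where Y: "\<And>x1 y1 x2 y2. \<bar>x1\<bar> \<le> \<bar>x\<bar> \<Longrightarrow> \<bar>x2\<bar> \<le> \<bar>x\<bar> \<Longrightarrow> y1 \<ge> Y \<Longrightarrow> y2 \<ge> Y \<Longrightarrow>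
       cmod (G om b ws (Complex x2 y2) - G om b ws (Complex x1 y1)) < e / 2"
      using G_unif[OF ho dc b abs_ge_zero half_gt_zero[OF e], of x ws] by blast
    obtain N where N: "\<And>n. n \<ge> N \<Longrightarrow> dist (s n) (Linf om b ws) < e / 2"
      using L e unfolding tendsto_iff eventually_sequentially by (meson half_gt_zero)
    define n where "n = max N (nat \<lceil>Y\<rceil>)"
    have nY: "real n \<ge> Y" unfolding n_def by linarith
    have sn: "dist (s n) (Linf om b ws) < e / 2" using N by (simp add: n_def)
    show "eventually (\<lambda>T. dist (G om b ws (Complex x T)) (Linf om b ws) < e) at_top"
      unfolding eventually_at_top_linorder
    proof (intro exI allI impI)
      fix T assume T: "T \<ge> Y"
      have "cmod (G om b ws (Complex x T) - s n) < e / 2"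
        using Y[of 0 x "real n" T] nY T by (simp add: s_def)
      then have "dist (G om b ws (Complex x T)) (s n) < e / 2" by (simp add: dist_norm)
      moreover have "dist (G om b ws (Complex x T)) (Linf om b ws) \<le>
          dist (G om b ws (Complex x T)) (s n) + dist (s n) (Linf om b ws)" by (rule dist_triangle)
      ultimately show "dist (G om b ws (Complex x T)) (Linf om b ws) < e"
        using sn by linarith
    qed
  qed
qed

lemma G_mult_deriv:
  assumes ho: "holo om" and b: "b \<in> upper_half" and z: "z \<in> upper_half"
  shows "((\<lambda>z. nc_mult (\<lambda>v. G om b v z) Q (j # ws)) has_field_derivative
           om j z * nc_mult (\<lambda>v. G om b v z) Q ws) (at z)"
proof -
  have R: "nc_mult (\<lambda>v. G om b v z) Q (j # ws) = Q (j # ws) + (\<Sum>i\<le>length ws. G om b (j # take i ws) z * Q (drop i ws))" for z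
    unfolding nc_mult_Cons by (simp add: nc_mult_def nshift_def)
  have "((\<lambda>z. Q (j # ws) + (\<Sum>i\<le>length ws. G om b (j # take i ws) z * Q (drop i ws)))
      has_field_derivative 0 + (\<Sum>i\<le>length ws. (om j z * G om b (take i ws) z) * Q (drop i ws))) (at z)"
    by (intro derivative_intros DERIV_sum DERIV_cmult_right G_deriv[OF ho b z])
  moreover have "(\<Sum>i\<le>length ws. (om j z * G om b (take i ws) z) * Q (drop i ws)) = om j z * nc_mult (\<lambda>v. G om b v z) Q ws"
    by (simp add: nc_mult_def sum_distrib_left mult.assoc)
  ultimately show ?thesis unfolding R by simp
qed

lemma vert_iter_F:
  assumes ho: "holo om" and b: "b \<in> upper_half" and Q0: "Q [] = 1"
    and lim: "\<And>ws. ((\<lambda>e. nc_mult (\<lambda>v. G om b v (Complex x e)) Q ws) \<longlongrightarrow> nc_one ws) (at_right 0)"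
  shows "t > 0 \<Longrightarrow> vert_iter om x ws t = nc_mult (\<lambda>v. G om b v (Complex x t)) Q ws"
proof (induction ws arbitrary: t)
  case Nil then show ?case using Q0 by simp
next
  case (Cons j ws)
  define F where "F = (\<lambda>ws z. nc_mult (\<lambda>v. G om b v z) Q ws)"
  define hh where "hh = (\<lambda>s. if s = 0 then 0 else F (j # ws) (Complex x s))"
  have der: "(hh has_vector_derivative (om j (Complex x s) * vert_iter om x ws s * \<i>)) (at s)" if s: "s > 0" for s
  proof -
    have "((\<lambda>s. F (j # ws) (Complex x s)) has_vector_derivative (om j (Complex x s) * F ws (Complex x s)) * \<i>) (at s)"
      unfolding F_def by (rule vd_vert[OF G_mult_deriv[OF ho b cH[OF s]]])
    then have "((\<lambda>s. F (j # ws) (Complex x s)) has_vector_derivative (om j (Complex x s) * vert_iter om x ws s * \<i>)) (at s)"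
      using Cons.IH[OF s] by (simp add: F_def)
    then show ?thesis
      by (rule has_vector_derivative_transform_within_open[where S = "{0<..}"]) (use s in \<open>auto simp: hh_def\<close>)
  qed
  have cont: "continuous_on {0..t} hh"
    unfolding continuous_on_eq_continuous_within
  proof
    fix s assume s: "s \<in> {0..t}"
    show "continuous (at s within {0..t}) hh"
    proof (cases "s = 0")
      case True
      have "((\<lambda>e. F (j # ws) (Complex x e)) \<longlongrightarrow> 0) (at_right 0)"
        using lim[of "j # ws"] by (simp add: F_def nc_one_def)
      then have "(hh \<longlongrightarrow> 0) (at_right 0)"
      proof (rule Lim_transform_eventually)
        show "eventually (\<lambda>e. F (j # ws) (Complex x e) = hh e) (at_right 0)"
          using eventually_at_right_less[of "0::real"] by eventually_elim (simp add: hh_def)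
      qed
      then show ?thesis using True Cons.prems
        by (simp add: continuous_within at_within_Icc_at_right hh_def)
    next
      case False
      then have "s > 0" using s by simp
      from has_vector_derivative_continuous[OF der[OF this]]
      show ?thesis by (rule continuous_within_subset) simp
    qed
  qed
  have "((\<lambda>s. om j (Complex x s) * vert_iter om x ws s * \<i>) has_integral (hh t - hh 0)) {0..t}"
    by (rule fundamental_theorem_of_calculus_interior[OF _ cont]) (use Cons.prems der in auto)
  then have "integral {0..t} (\<lambda>s. om j (Complex x s) * vert_iter om x ws s * \<i>) = hh t - hh 0"
    by (rule integral_unique)
  then have "vert_iter om x (j # ws) t = hh t - hh 0" by (simp only: vert_iter.simps)
  then show ?case using Cons.prems by (simp add: hh_def F_def)
qed

lemma J_formula:
  assumes ho: "holo om" and dc: "decays om" and b: "b \<in> upper_half"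
    and P: "\<And>ws. ((\<lambda>e. G om b ws (Complex x e)) \<longlongrightarrow> P ws) (at_right 0)"
  shows "J_to_infty om x = nc_mult (Linf om b) (nc_inverse P)"
proof -
  have P0: "P [] = 1"
  proof -
    have "((\<lambda>e::real. 1::complex) \<longlongrightarrow> P []) (at_right 0)" using P[of "[]"] by simp
    then show ?thesis using tendsto_unique[OF _ _ tendsto_const] by (metis trivial_limit_at_right_real)
  qed
  define Q where "Q = nc_inverse P"
  have Q0: "Q [] = 1" using nc_inverse_Nil[of P, OF P0] by (simp add: Q_def)
  have lim: "((\<lambda>e. nc_mult (\<lambda>v. G om b v (Complex x e)) Q ws) \<longlongrightarrow> nc_one ws) (at_right 0)" for ws
  proof -
    have "((\<lambda>e. nc_mult (\<lambda>v. G om b v (Complex x e)) (\<lambda>v. Q v) ws) \<longlongrightarrow> nc_mult P Q ws) (at_right 0)"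
      by (rule tendsto_nc_mult[OF P tendsto_const])
    then show ?thesis using nc_inverse(1)[of P, OF P0] by (simp add: Q_def)
  qed
  have vi: "vert_iter om x ws t = nc_mult (\<lambda>v. G om b v (Complex x t)) Q ws" if "t > 0" for ws t
    by (rule vert_iter_F[OF ho b Q0 lim that])
  show ?thesis
  proof
    fix ws
    have "((\<lambda>t. nc_mult (\<lambda>v. G om b v (Complex x t)) (\<lambda>v. Q v) ws) \<longlongrightarrow> nc_mult (Linf om b) Q ws) at_top"
      by (rule tendsto_nc_mult[OF Linf_tendsto[OF ho dc b] tendsto_const])
    then have "((\<lambda>t. vert_iter om x ws t) \<longlongrightarrow> nc_mult (Linf om b) Q ws) at_top"
      by (rule Lim_transform_eventually) (auto simp: vi eventually_at_top_linorder intro!: exI[of _ 1])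
    then show "J_to_infty om x ws = nc_mult (Linf om b) (nc_inverse P) ws"
      unfolding J_to_infty_def Q_def by (simp add: tendsto_Lim)
  qed
qed

context
  fixes \<phi> :: "nat \<Rightarrow> complex \<Rightarrow> complex" and r w :: nat
  assumes basis: "cusp_form_basis (w + 2) r \<phi>" and ev: "even w"
begin

abbreviation om :: "int \<Rightarrow> int \<Rightarrow> nat \<Rightarrow> complex \<Rightarrow> complex" where
  "om p q \<equiv> Omega \<phi> r w p q"

lemma ho: "holo (om p q)" by (rule Omega_holo[OF basis])
lemma dc: "decays (om p q)" by (rule Omega_decays[OF basis])

lemma Tr:
  assumes "a * d - b * c = 1" "x \<in> upper_half" "z \<in> upper_half"
  shows "G (om p q) (mob a b c d x) ws (mob a b c d z) = G (om (p*a - q*c) (q*d - p*b)) x ws z"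
  by (rule G_transform[OF ho ho assms]) (use Omega_transform[OF basis ev assms(1)] in simp)

lemma Linf_base:
  assumes "a \<in> upper_half" "a' \<in> upper_half"
  shows "Linf (om p q) a' = nc_mult (Linf (om p q) a) (\<lambda>v. G (om p q) a' v a)"
proof
  fix ws
  have t1: "((\<lambda>T. nc_mult (\<lambda>v. G (om p q) a v (Complex 0 T)) (\<lambda>v. G (om p q) a' v a) ws)
      \<longlongrightarrow> nc_mult (Linf (om p q) a) (\<lambda>v. G (om p q) a' v a) ws) at_top"
    by (rule tendsto_nc_mult[OF Linf_tendsto[OF ho dc assms(1)] tendsto_const])
  have t2: "((\<lambda>T. G (om p q) a' ws (Complex 0 T)) \<longlongrightarrow> Linf (om p q) a' ws) at_top"
    by (rule Linf_tendsto[OF ho dc assms(2)])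
  have ev: "eventually (\<lambda>T. nc_mult (\<lambda>v. G (om p q) a v (Complex 0 T)) (\<lambda>v. G (om p q) a' v a) ws =
      G (om p q) a' ws (Complex 0 T)) at_top"
    unfolding eventually_at_top_linorder
    by (intro exI[of _ 1] allI impI G_chen[OF ho assms(1,2), symmetric]) (simp add: in_H)
  show "Linf (om p q) a' ws = nc_mult (Linf (om p q) a) (\<lambda>v. G (om p q) a' v a) ws"
    using tendsto_unique[OF trivial_limit_at_top_linorder t2 Lim_transform_eventually[OF t1 ev]] .
qed

lemma mob_T: "mob 1 n 0 1 z = z + of_int n"
  by (simp add: mob_def)

lemma Linf_shift:
  assumes "a \<in> upper_half"
  shows "Linf (om p (q - p * n)) a = Linf (om p q) (a + of_int n)"
proof
  fix ws
  have a': "a + of_int n \<in> upper_half" using assms by (simp add: in_H)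
  have eq: "G (om p q) (a + of_int n) ws (Complex (of_int n) T) = G (om p (q - p * n)) a ws (Complex 0 T)"
    if "T > 0" for T
  proof -
    have "G (om p q) (mob 1 n 0 1 a) ws (mob 1 n 0 1 (Complex 0 T)) = G (om (p*1 - q*0) (q*1 - p*n)) a ws (Complex 0 T)"
      by (rule Tr) (use assms that in \<open>simp_all add: in_H\<close>)
    moreover have "mob 1 n 0 1 (Complex 0 T) = Complex (of_int n) T"
      by (simp add: mob_def complex_eq_iff)
    ultimately show ?thesis by (simp add: mob_T)
  qed
  have t1: "((\<lambda>T. G (om p q) (a + of_int n) ws (Complex (of_int n) T)) \<longlongrightarrow> Linf (om p q) (a + of_int n) ws) at_top"
    by (rule Linf_tendsto[OF ho dc a'])
  have t2: "((\<lambda>T. G (om p (q - p * n)) a ws (Complex 0 T)) \<longlongrightarrow> Linf (om p (q - p * n)) a ws) at_top"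
    by (rule Linf_tendsto[OF ho dc assms])
  have ev: "eventually (\<lambda>T. G (om p q) (a + of_int n) ws (Complex (of_int n) T) = G (om p (q - p * n)) a ws (Complex 0 T)) at_top"
    unfolding eventually_at_top_linorder by (intro exI[of _ 1] allI impI eq) simp
  show "Linf (om p (q - p * n)) a ws = Linf (om p q) (a + of_int n) ws"
    using tendsto_unique[OF trivial_limit_at_top_linorder t2 Lim_transform_eventually[OF t1 ev]] by simp
qed

end

lemma mob_vert:
  assumes "q0 * d0 - b0 * p0 = 1" "p0 \<noteq> 0" "e > 0"
  shows "mob q0 b0 p0 d0 (Complex (- of_int d0 / of_int p0) (1 / (of_int p0 ^ 2 * e))) = Complex (of_int q0 / of_int p0) e"
proof -
  define P :: complex where "P = of_int p0"
  define E :: complex where "E = of_real e"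
  define Q :: complex where "Q = of_int q0"
  define B :: complex where "B = of_int b0"
  define D :: complex where "D = of_int d0"
  have P: "P \<noteq> 0" using assms(2) by (simp add: P_def)
  have E: "E \<noteq> 0" using assms(3) by (simp add: E_def)
  define v where "v = - D / P + \<i> / (P^2 * E)"
  have v: "Complex (- of_int d0 / of_int p0) (1 / (of_int p0 ^ 2 * e)) = v"
    by (simp add: complex_eq_iff v_def P_def D_def E_def Re_divide Im_divide power2_eq_square)
  have w: "Complex (of_int q0 / of_int p0) e = Q / P + \<i> * E"
    by (simp add: complex_eq_iff P_def Q_def E_def)
  have det: "Q * D - B * P = 1"
    using arg_cong[OF assms(1), of "of_int :: int \<Rightarrow> complex"] by (simp add: P_def Q_def B_def D_def)
  have den: "P * v + D = \<i> / (P * E)"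
    using P E unfolding v_def by (simp add: field_simps power2_eq_square)
  have dnz: "P * v + D \<noteq> 0" using den P E by simp
  have num: "Q * v + B = (Q / P + \<i> * E) * (P * v + D)"
  proof -
    have "Q * v + B = - (Q * D - B * P) / P + \<i> * Q / (P^2 * E)"
      using P E unfolding v_def by (simp add: field_simps power2_eq_square)
    also have "\<dots> = - 1 / P + \<i> * Q / (P^2 * E)" by (simp add: det)
    also have "\<dots> = (Q / P + \<i> * E) * (\<i> / (P * E))"
      using P E by (simp add: field_simps power2_eq_square)
    finally show ?thesis by (simp add: den)
  qed
  show ?thesis unfolding v w mob_def P_def[symmetric] Q_def[symmetric] B_def[symmetric] D_def[symmetric]
    using num dnz by (simp add: divide_eq_eq)
qed

context
  fixes \<phi> :: "nat \<Rightarrow> complex \<Rightarrow> complex" and r w :: nat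
  assumes basis: "cusp_form_basis (w + 2) r \<phi>" and ev: "even w"
begin

lemma inv_lim:
  assumes "k > (0::real)"
  shows "filterlim (\<lambda>e. 1 / (k * e)) at_top (at_right 0)"
  unfolding filterlim_at_top
proof
  fix Z :: real
  show "eventually (\<lambda>e. Z \<le> 1 / (k * e)) (at_right 0)"
    unfolding eventually_at_right_field
  proof (intro exI[of _ "1 / (k * (\<bar>Z\<bar> + 1))"] conjI allI impI)
    show "0 < 1 / (k * (\<bar>Z\<bar> + 1))" using assms by (simp add: add_pos_nonneg)
    fix y :: real assume y: "0 < y" "y < 1 / (k * (\<bar>Z\<bar> + 1))"
    have A: "k * (\<bar>Z\<bar> + 1) > 0" using assms by (simp add: add_pos_nonneg)
    have "y * (k * (\<bar>Z\<bar> + 1)) < 1" using y(2) pos_less_divide_eq[OF A] by simp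
    then have "(\<bar>Z\<bar> + 1) * (k * y) < 1" by (simp add: mult_ac)
    moreover have "k * y > 0" using assms y by simp
    ultimately have "\<bar>Z\<bar> + 1 < 1 / (k * y)" using pos_less_divide_eq[of "k * y"] by simp
    then show "Z \<le> 1 / (k * y)" by linarith
  qed
qed

lemma J_cusp:
  assumes det: "q0 * d0 - b0 * p0 = 1" and p0: "p0 \<noteq> 0" and c: "c \<in> upper_half"
  shows "J_to_infty (om \<phi> r w p q) (of_int q0 / of_int p0) =
     nc_mult (Linf (om \<phi> r w p q) (mob q0 b0 p0 d0 c)) (nc_inverse (Linf (om \<phi> r w (p*q0 - q*p0) (q*d0 - p*b0)) c))"
proof (rule J_formula[OF ho[OF basis ev] dc[OF basis ev] mob_H[OF det c]])
  fix ws
  define k :: real where "k = of_int p0 ^ 2"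
  have k: "k > 0" using p0 by (simp add: k_def)
  have "((\<lambda>e. G (om \<phi> r w (p*q0 - q*p0) (q*d0 - p*b0)) c ws (Complex (- of_int d0 / of_int p0) (1 / (k * e))))
       \<longlongrightarrow> Linf (om \<phi> r w (p*q0 - q*p0) (q*d0 - p*b0)) c ws) (at_right 0)"
    by (rule filterlim_compose[OF Linf_tendsto[OF ho[OF basis ev] dc[OF basis ev] c] inv_lim[OF k]])
  moreover have "eventually (\<lambda>e. G (om \<phi> r w (p*q0 - q*p0) (q*d0 - p*b0)) c ws (Complex (- of_int d0 / of_int p0) (1 / (k * e)))
      = G (om \<phi> r w p q) (mob q0 b0 p0 d0 c) ws (Complex (of_int q0 / of_int p0) e)) (at_right 0)"
    using eventually_at_right_less[of "0::real"]
  proof eventually_elim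
    case (elim e)
    have H: "Complex (- of_int d0 / of_int p0) (1 / (k * e)) \<in> upper_half" using k elim by (simp add: in_H)
    have "G (om \<phi> r w p q) (mob q0 b0 p0 d0 c) ws (mob q0 b0 p0 d0 (Complex (- of_int d0 / of_int p0) (1 / (k * e))))
        = G (om \<phi> r w (p*q0 - q*p0) (q*d0 - p*b0)) c ws (Complex (- of_int d0 / of_int p0) (1 / (k * e)))"
      by (rule Tr[OF basis ev det c H])
    then show ?case using mob_vert[OF det p0 elim] by (simp add: k_def)
  qed
  ultimately show "((\<lambda>e. G (om \<phi> r w p q) (mob q0 b0 p0 d0 c) ws (Complex (of_int q0 / of_int p0) e))
       \<longlongrightarrow> Linf (om \<phi> r w (p*q0 - q*p0) (q*d0 - p*b0)) c ws) (at_right 0)"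
    by (rule Lim_transform_eventually)
qed

end

lemma nc_c1: "B [] = 1 \<Longrightarrow> nc_mult B (nc_mult (nc_inverse B) C) = C"
  by (simp add: nc_mult_assoc[symmetric] nc_inverse)
lemma nc_c2: "B [] = 1 \<Longrightarrow> nc_mult (nc_inverse B) (nc_mult B C) = C"
  by (simp add: nc_mult_assoc[symmetric] nc_inverse)

lemma Linf_Nil: "Linf omg b [] = 1"
  by (simp add: Linf_def limI[OF tendsto_const])

lemma vert_iter_bad:
  assumes "\<not> set ws \<subseteq> {..<r}"
  shows "vert_iter (Omega \<phi> r w p q) x ws t = 0"
  using assms
proof (induction ws arbitrary: t)
  case Nil then show ?case by simp
next
  case (Cons j ws)
  show ?case
  proof (cases "j < r")
    case True
    then have "\<not> set ws \<subseteq> {..<r}" using Cons.prems by auto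
    then show ?thesis using Cons.IH by simp
  next
    case False
    then show ?thesis by (simp add: Omega_def)
  qed
qed

lemma J_group: "J_to_infty (Omega \<phi> r w p q) x \<in> nc_group r"
proof -
  have e1: "vert_iter (Omega \<phi> r w p q) x [] = (\<lambda>t. 1)" by (rule ext) simp
  have "J_to_infty (Omega \<phi> r w p q) x [] = 1"
    unfolding J_to_infty_def e1 by (simp add: tendsto_Lim[OF trivial_limit_at_top_linorder tendsto_const])
  moreover have "J_to_infty (Omega \<phi> r w p q) x ws = 0" if "\<not> set ws \<subseteq> {..<r}" for ws
  proof -
    have e2: "vert_iter (Omega \<phi> r w p q) x ws = (\<lambda>t. 0)" by (rule ext) (rule vert_iter_bad[OF that])
    show ?thesis unfolding J_to_infty_def e2
      by (simp add: tendsto_Lim[OF trivial_limit_at_top_linorder tendsto_const])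
  qed
  ultimately show ?thesis by (simp add: nc_group_def)
qed

context
  fixes \<phi> :: "nat \<Rightarrow> complex \<Rightarrow> complex" and r w :: nat
  assumes basis: "cusp_form_basis (w + 2) r \<phi>" and ev: "even w"
begin

abbreviation Lam :: "int \<Rightarrow> int \<Rightarrow> complex \<Rightarrow> ncps" where
  "Lam p q a \<equiv> Linf (Omega \<phi> r w p q) a"

lemma iH: "\<i> \<in> upper_half" by (simp add: in_H)

lemma f_formula: "recip_f \<phi> r w p q = nc_mult (Lam p q \<i>) (nc_inverse (Lam (-q) p \<i>))"
proof -
  have "J_to_infty (Omega \<phi> r w p q) (of_int 0 / of_int 1) =
     nc_mult (Lam p q (mob 0 (-1) 1 0 \<i>)) (nc_inverse (Lam (p*0 - q*1) (q*0 - p*(-1)) \<i>))"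
    by (rule J_cusp[OF basis ev _ _ iH]) simp_all
  moreover have "mob 0 (-1) 1 0 \<i> = \<i>" by (simp add: mob_def)
  ultimately show ?thesis by (simp add: recip_f_def)
qed

lemma f_recip: "nc_mult (recip_f \<phi> r w p q) (recip_f \<phi> r w (-q) p) = nc_one"
proof -
  have e: "Lam (-p) (-q) \<i> = Lam p q \<i>" using Omega_neg(1)[OF ev] by simp
  show ?thesis unfolding f_formula e
    by (simp add: nc_mult_assoc nc_c2 Linf_Nil nc_inverse)
qed

lemma f_sym: "recip_f \<phi> r w p (-q) = recip_f \<phi> r w (-p) q"
  by (simp add: recip_f_def Omega_neg(2)[OF ev])

lemma f_add: "nc_mult (recip_f \<phi> r w p (p + q)) (recip_f \<phi> r w (p + q) q) = recip_f \<phi> r w p q"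
proof -
  define h where "h = (\<i> - 1) / 2"
  have hH: "h \<in> upper_half" by (simp add: h_def in_H)
  have m1H: "\<i> - 1 \<in> upper_half" "\<i> + 1 \<in> upper_half" by (simp_all add: in_H)
  define Lpq where "Lpq = Lam p q \<i>"
  define L2 where "L2 = Lam (p+q) q \<i>"
  define L3 where "L3 = Lam (-q) p \<i>"
  define G1 where "G1 = (\<lambda>v. G (Omega \<phi> r w p q) (\<i> - 1) v \<i>)"
  define G2 where "G2 = (\<lambda>v. G (Omega \<phi> r w (p+q) q) (\<i> + 1) v \<i>)"
  define G3 where "G3 = (\<lambda>v. G (Omega \<phi> r w (-q) p) (\<i> + 1) v \<i>)"
  have a1: "Lam p (p+q) \<i> = nc_mult Lpq G1"
  proof -
    have "Lam p (q - p * (-1)) \<i> = Lam p q (\<i> + of_int (-1))" by (rule Linf_shift[OF basis ev iH])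
    also have "\<dots> = nc_mult Lpq G1"
      using Linf_base[OF basis ev iH m1H(1)] by (simp add: Lpq_def G1_def)
    finally show ?thesis by (simp add: add.commute)
  qed
  have a2: "Lam (-(p+q)) p \<i> = nc_mult L2 G2"
  proof -
    have "Lam (-(p+q)) p \<i> = Lam (p+q) (q - (p+q) * 1) \<i>"
      using Omega_neg(1)[OF ev, of \<phi> r "p+q" "-p"] by simp
    also have "\<dots> = Lam (p+q) q (\<i> + of_int 1)" by (rule Linf_shift[OF basis ev iH])
    also have "\<dots> = nc_mult L2 G2"
      using Linf_base[OF basis ev iH m1H(2)] by (simp add: L2_def G2_def)
    finally show ?thesis .
  qed
  have a3: "Lam (-q) (p+q) \<i> = nc_mult L3 G3"
  proof -
    have "Lam (-q) (p - (-q) * 1) \<i> = Lam (-q) p (\<i> + of_int 1)" by (rule Linf_shift[OF basis ev iH])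
    also have "\<dots> = nc_mult L3 G3"
      using Linf_base[OF basis ev iH m1H(2)] by (simp add: L3_def G3_def)
    finally show ?thesis by (simp add: add.commute)
  qed
  have g3: "G3 v = G (Omega \<phi> r w p q) h v \<i>" for v
  proof -
    have "G (Omega \<phi> r w p q) (mob 0 (-1) 1 0 (\<i> + 1)) v (mob 0 (-1) 1 0 \<i>) =
        G (Omega \<phi> r w (p*0 - q*1) (q*0 - p*(-1))) (\<i> + 1) v \<i>"
      by (rule Tr[OF basis ev _ m1H(2) iH]) simp
    moreover have "mob 0 (-1) 1 0 (\<i> + 1) = h" "mob 0 (-1) 1 0 \<i> = \<i>"
    proof -
      have nz: "\<i> + 1 \<noteq> 0" by (simp add: complex_eq_iff)
      show "mob 0 (-1) 1 0 (\<i> + 1) = h" using nz by (simp add: mob_def h_def field_simps)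
    qed (simp add: mob_def)
    ultimately show ?thesis by (simp add: G3_def)
  qed
  have g2: "G2 v = G (Omega \<phi> r w p q) (\<i> - 1) v h" for v
  proof -
    have "G (Omega \<phi> r w p q) (mob 1 0 (-1) 1 (\<i> + 1)) v (mob 1 0 (-1) 1 \<i>) =
        G (Omega \<phi> r w (p*1 - q*(-1)) (q*1 - p*0)) (\<i> + 1) v \<i>"
      by (rule Tr[OF basis ev _ m1H(2) iH]) simp
    moreover have "mob 1 0 (-1) 1 (\<i> + 1) = \<i> - 1" "mob 1 0 (-1) 1 \<i> = h"
    proof -
      have nz: "1 - \<i> \<noteq> 0" by (simp add: complex_eq_iff)
      show "mob 1 0 (-1) 1 \<i> = h" using nz by (simp add: mob_def h_def field_simps)
      show "mob 1 0 (-1) 1 (\<i> + 1) = \<i> - 1" by (simp add: mob_def field_simps)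
    qed
    ultimately show ?thesis by (simp add: G2_def)
  qed
  have g1: "G1 = nc_mult G3 G2"
  proof
    fix v
    show "G1 v = nc_mult G3 G2 v"
      unfolding G1_def g2 g3 using G_chen[OF ho[OF basis ev] hH m1H(1) iH] by (simp add: g2 g3)
  qed
  have N: "L2 [] = 1" "L3 [] = 1" "G2 [] = 1" "G3 [] = 1" "Lpq [] = 1"
    by (simp_all add: L2_def L3_def G2_def G3_def Lpq_def Linf_Nil)
  have "nc_mult (recip_f \<phi> r w p (p + q)) (recip_f \<phi> r w (p + q) q) =
      nc_mult (nc_mult Lpq G1) (nc_mult (nc_inverse (nc_mult L2 G2)) (nc_mult L2 (nc_inverse (nc_mult L3 G3))))"
    unfolding f_formula a1 a2[unfolded minus_add_distrib[symmetric]] by (simp add: nc_mult_assoc L2_def a3)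
  also have "\<dots> = nc_mult Lpq (nc_inverse L3)"
    unfolding g1 using N by (simp add: nc_inverse_mult nc_mult_assoc nc_c1 nc_c2)
  also have "\<dots> = recip_f \<phi> r w p q" by (simp add: f_formula Lpq_def L3_def)
  finally show ?thesis .
qed

end

lemma bez:
  fixes p q :: int
  assumes "coprime p q"
  shows "\<exists>b0 d0. q * d0 - b0 * p = 1"
proof -
  obtain u v where "u * q + v * p = gcd q p" using bezout_int by blast
  moreover have "gcd q p = 1" using assms by (simp add: coprime_iff_gcd_eq_1 gcd.commute)
  ultimately have "q * u - (- v) * p = 1" by (simp add: algebra_simps)
  then show ?thesis by blast
qed

context
  fixes \<phi> :: "nat \<Rightarrow> complex \<Rightarrow> complex" and r w :: nat
  assumes basis: "cusp_form_basis (w + 2) r \<phi>" and ev: "even w"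
begin

lemma D_formula:
  assumes "p \<noteq> 0" "q * d0 - b0 * p = 1" "c \<in> upper_half"
  shows "dedekind_D \<phi> r w p q = nc_mult (Lam \<phi> r w p q (mob q b0 p d0 c)) (nc_inverse (Lam \<phi> r w 0 1 c))"
proof -
  have "J_to_infty (Omega \<phi> r w p q) (of_int q / of_int p) =
     nc_mult (Lam \<phi> r w p q (mob q b0 p d0 c)) (nc_inverse (Lam \<phi> r w (p*q - q*p) (q*d0 - p*b0) c))"
    by (rule J_cusp[OF basis ev assms(2,1,3)])
  moreover have "p*q - q*p = 0" "q*d0 - p*b0 = 1" using assms(2) by (simp_all add: algebra_simps)
  ultimately show ?thesis using assms(1) by (simp add: dedekind_D_def)
qed

lemma D_shift:
  assumes "coprime p q"
  shows "dedekind_D \<phi> r w p q = dedekind_D \<phi> r w p (q + p)"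
proof (cases "p = 0")
  case True then show ?thesis by (simp add: dedekind_D_def)
next
  case False
  obtain b0 d0 where det: "q * d0 - b0 * p = 1" using bez[OF assms] by blast
  have det2: "(q + p) * d0 - (b0 + d0) * p = 1" using det by (simp add: algebra_simps)
  define a where "a = mob q b0 p d0 \<i>"
  have aH: "a \<in> upper_half" unfolding a_def by (rule mob_H[OF det iH[OF basis ev]])
  have "mob 1 1 0 1 (mob q b0 p d0 \<i>) = mob (1*q + 1*p) (1*b0 + 1*d0) (0*q + 1*p) (0*b0 + 1*d0) \<i>"
    by (rule mob_comp[OF _ det iH[OF basis ev]]) simp
  then have m: "mob (q + p) (b0 + d0) p d0 \<i> = a + 1" by (simp add: a_def mob_def)
  have "Lam \<phi> r w p (q - p * (-1)) (a + 1) = Lam \<phi> r w p q (a + 1 + of_int (-1))"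
    by (rule Linf_shift[OF basis ev]) (use aH in \<open>simp add: in_H\<close>)
  then have l: "Lam \<phi> r w p (q + p) (a + 1) = Lam \<phi> r w p q a" by (simp add: add.commute)
  show ?thesis
    using D_formula[OF False det iH[OF basis ev]] D_formula[OF False det2 iH[OF basis ev]]
    unfolding a_def[symmetric] m l by simp
qed

lemma D_sym:
  shows "dedekind_D \<phi> r w p (-q) = dedekind_D \<phi> r w (-p) q"
proof (cases "p = 0")
  case True then show ?thesis by (simp add: dedekind_D_def)
next
  case False
  have "(of_int (-q) / of_int p :: real) = of_int q / of_int (-p)" by simp
  then show ?thesis using False by (simp add: dedekind_D_def Omega_neg(2)[OF ev])
qed

lemma f_inv: "nc_inverse (recip_f \<phi> r w q 0) = recip_f \<phi> r w 0 q"
proof (rule nc_inverse_eq)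
  show "nc_mult (recip_f \<phi> r w q 0) (recip_f \<phi> r w 0 q) = nc_one"
    using f_recip[OF basis ev, of q 0] by simp
  have "recip_f \<phi> r w q (-0) = recip_f \<phi> r w (-q) 0" by (rule f_sym[OF basis ev])
  then show "nc_mult (recip_f \<phi> r w 0 q) (recip_f \<phi> r w q 0) = nc_one"
    using f_recip[OF basis ev, of 0 q] by simp
qed

lemma D_recip:
  assumes "coprime p q"
  shows "nc_mult (dedekind_D \<phi> r w p q) (nc_inverse (dedekind_D \<phi> r w q (- p))) = recip_f \<phi> r w p q"
proof (cases "p = 0")
  case True
  then have q: "q \<noteq> 0" using assms by auto
  have "dedekind_D \<phi> r w q (- p) = recip_f \<phi> r w q 0"
    using True q by (simp add: dedekind_D_def recip_f_def)
  then show ?thesis using True by (simp add: dedekind_D_def f_inv)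
next
  case p: False
  show ?thesis
  proof (cases "q = 0")
    case True
    have "nc_inverse nc_one = nc_one" by (rule nc_inverse_eq) simp_all
    then show ?thesis using True p by (simp add: dedekind_D_def recip_f_def)
  next
    case q: False
    obtain b0 d0 where det: "q * d0 - b0 * p = 1" using bez[OF assms] by blast
    have detc: "d0 * q - (- b0) * (- p) = 1" using det by (simp add: algebra_simps)
    have det2: "(- p) * b0 - (- d0) * q = 1" using det by (simp add: algebra_simps)
    define c where "c = mob d0 (- b0) (- p) q \<i>"
    have cH: "c \<in> upper_half" unfolding c_def by (rule mob_H[OF detc iH[OF basis ev]])
    have m1: "mob q b0 p d0 c = \<i>"
    proof -
      have "mob q b0 p d0 c = mob (q*d0 + b0*(-p)) (q*(-b0) + b0*q) (p*d0 + d0*(-p)) (p*(-b0) + d0*q) \<i>"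
        unfolding c_def by (rule mob_comp[OF det detc iH[OF basis ev]])
      also have "\<dots> = mob 1 0 0 1 \<i>" using det by (simp add: algebra_simps)
      finally show ?thesis by (simp add: mob_def)
    qed
    have m2: "mob (-p) (-d0) q b0 c = \<i>"
    proof -
      have "mob (-p) (-d0) q b0 c = mob ((-p)*d0 + (-d0)*(-p)) ((-p)*(-b0) + (-d0)*q) (q*d0 + b0*(-p)) (q*(-b0) + b0*q) \<i>"
        unfolding c_def by (rule mob_comp[OF det2 detc iH[OF basis ev]])
      also have "\<dots> = mob 0 (-1) 1 0 \<i>" using det by (simp add: algebra_simps)
      finally show ?thesis by (simp add: mob_def)
    qed
    define X where "X = Lam \<phi> r w 0 1 c"
    have X: "X [] = 1" by (simp add: X_def Linf_Nil)
    have D1: "dedekind_D \<phi> r w p q = nc_mult (Lam \<phi> r w p q \<i>) (nc_inverse X)"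
      using D_formula[OF p det cH] by (simp add: m1 X_def)
    have D2: "dedekind_D \<phi> r w q (-p) = nc_mult (Lam \<phi> r w (-q) p \<i>) (nc_inverse X)"
      using D_formula[OF q det2 cH] by (simp add: m2 X_def Omega_neg(2)[OF ev])
    have N: "Lam \<phi> r w (-q) p \<i> [] = 1" "nc_inverse X [] = 1" by (simp_all add: Linf_Nil nc_inverse_Nil[of X, OF X])
    show ?thesis unfolding D1 D2 f_formula[OF basis ev]
      using N X by (simp add: nc_inverse_mult nc_inverse_inverse nc_mult_assoc nc_c1 nc_c2)
  qed
qed

end

theorem theorem2p2:
  fixes w r :: nat and \<phi> :: "nat \<Rightarrow> complex \<Rightarrow> complex"
  assumes "even w"
    and "cusp_form_basis (w + 2) r \<phi>"
  shows "reciprocity_function r (recip_f \<phi> r w)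
       \<and> dedekind_symbol r (recip_f \<phi> r w) (dedekind_D \<phi> r w)"
proof
  note basis = assms(2) and ev = assms(1)
  show "reciprocity_function r (recip_f \<phi> r w)"
    unfolding reciprocity_function_def
    using f_sym[OF basis ev] f_recip[OF basis ev] f_add[OF basis ev]
    by (auto simp: recip_f_def J_group)
  have grp: "dedekind_D \<phi> r w p q \<in> nc_group r" for p q
    by (simp add: dedekind_D_def J_group nc_one_group)
  show "dedekind_symbol r (recip_f \<phi> r w) (dedekind_D \<phi> r w)"
    unfolding dedekind_symbol_def
    using grp D_shift[OF basis ev] D_sym[OF basis ev] D_recip[OF basis ev]
    by (auto simp: W_def)
qed

end
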